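(* Let $0<\varepsilon<\frac12$ and $c=(1-\varepsilon)^{1/h}(b_1\cdots b_h)^{1/h^2}/\Gamma(1/h)$. Let $\mathscr{A}\subseteq\mathbb{Z}_{\ge0}$ be the random set with $0\in\mathscr{A}$ and mutually independent events $\{n\in\mathscr{A}\}$ ($n\ge1$) of probability $\min\{c(n\log n)^{1/h}/n,\,1\}$. Then \[ \sum_{n\ge1}\Pr\big(r_{\mathscr{A},h}(n)=0\big)=\infty. \]
   Context: Fix an integer $h\ge 2$ and positive integers $b_1,\dots,b_h$, not necessarily distinct, with $\gcd(b_1,\dots,b_h)=1$. For $A\subseteq\mathbb{Z}_{\ge 0}$, $1\le\ell\le h$ and an integer $n\ge 0$, let $r_{A,\ell}(n)$ be the number of $\ell$-tuples $(k_1,\dots,k_\ell)\in A^\ell$ with $b_1k_1+\cdots+b_\ell k_\ell=n$. *)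

theory Defs
  imports "HOL-Probability.Probability"
begin

definition rep :: "(nat \<Rightarrow> nat) \<Rightarrow> nat set \<Rightarrow> nat \<Rightarrow> nat \<Rightarrow> nat" where
  "rep b A l n = card {k :: nat list. length k = l \<and> set k \<subseteq> A \<and>
                        (\<Sum>i<l. b (Suc i) * k ! i) = n}"

definition rand_set :: "(nat \<Rightarrow> bool) \<Rightarrow> nat set" where
  "rand_set \<omega> = insert 0 {n. n \<ge> 1 \<and> \<omega> n}"

definition bern_space :: "(nat \<Rightarrow> real) \<Rightarrow> (nat \<Rightarrow> bool) measure" where
  "bern_space p = PiM UNIV (\<lambda>n. measure_pmf (bernoulli_pmf (p n)))"

end

theory Submission
  imports Defs "HOL-Real_Asymp.Real_Asymp"
begin


definition wt :: "(nat\<Rightarrow>real) \<Rightarrow> nat set \<Rightarrow> nat set \<Rightarrow> real" where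
  "wt w U X = (\<Prod>i\<in>X. w i) * (\<Prod>i\<in>U-X. 1 - w i)"
definition mu :: "(nat\<Rightarrow>real) \<Rightarrow> nat set \<Rightarrow> (nat set \<Rightarrow> bool) \<Rightarrow> real" where
  "mu w U P = (\<Sum>X\<in>{X. X \<subseteq> U \<and> P X}. wt w U X)"

lemma mu_empty: "mu w {} P = (if P {} then 1 else 0)"
proof -
  have "{X. X \<subseteq> {} \<and> P X} = (if P {} then {{}} else {})" by auto
  then show ?thesis by (simp add: mu_def wt_def)
qed

lemma mu_insert:
  assumes "finite U" "a \<notin> U"
  shows "mu w (insert a U) P = w a * mu w U (\<lambda>X. P (insert a X)) + (1 - w a) * mu w U P"
proof -
  have split: "{X. X \<subseteq> insert a U \<and> P X} = {X. X\<subseteq>U \<and> P X} \<union> insert a ` {X. X \<subseteq> U \<and> P (insert a X)}"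
  proof (rule set_eqI, rule iffI)
    fix X assume "X \<in> {X. X \<subseteq> insert a U \<and> P X}"
    then show "X \<in> {X. X\<subseteq>U \<and> P X} \<union> insert a ` {X. X \<subseteq> U \<and> P (insert a X)}"
    proof (cases "a \<in> X")
      case True
      then have "X = insert a (X - {a})" by auto
      then show ?thesis using \<open>X \<in> _\<close> by (intro UnI2 image_eqI[of _ _ "X - {a}"]) auto
    qed auto
  qed auto
  have fin: "finite {X. X\<subseteq>U \<and> P X}" "finite {X. X \<subseteq> U \<and> P (insert a X)}"
    using assms by (auto intro: finite_subset[of _ "Pow U"])
  have disj: "{X. X\<subseteq>U \<and> P X} \<inter> insert a ` {X. X \<subseteq> U \<and> P (insert a X)} = {}"
    using assms by auto
  have inj: "inj_on (insert a) {X. X \<subseteq> U \<and> P (insert a X)}"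
    using assms by (auto simp: inj_on_def)
  have w0: "wt w (insert a U) X = (1 - w a) * wt w U X" if "X \<subseteq> U" for X
  proof -
    have "insert a U - X = insert a (U - X)" using that assms by auto
    then show ?thesis using that assms by (simp add: wt_def)
  qed
  have w1: "wt w (insert a U) (insert a X) = w a * wt w U X" if "X \<subseteq> U" for X
  proof -
    have "insert a U - insert a X = U - X" using that assms by auto
    moreover have "a \<notin> X" using that assms by auto
    moreover have "finite X" using that assms finite_subset by auto
    ultimately show ?thesis by (simp add: wt_def)
  qed
  have "mu w (insert a U) P = (\<Sum>X\<in>{X. X\<subseteq>U \<and> P X}. wt w (insert a U) X)
       + (\<Sum>X\<in>insert a ` {X. X \<subseteq> U \<and> P (insert a X)}. wt w (insert a U) X)"
    unfolding mu_def split using fin disj by (intro sum.union_disjoint) auto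
  also have "(\<Sum>X\<in>insert a ` {X. X \<subseteq> U \<and> P (insert a X)}. wt w (insert a U) X)
      = (\<Sum>X\<in>{X. X \<subseteq> U \<and> P (insert a X)}. wt w (insert a U) (insert a X))"
    using inj by (simp add: sum.reindex)
  also have "\<dots> = w a * mu w U (\<lambda>X. P (insert a X))"
    unfolding mu_def sum_distrib_left by (intro sum.cong) (auto simp: w1)
  also have "(\<Sum>X\<in>{X. X\<subseteq>U \<and> P X}. wt w (insert a U) X) = (1 - w a) * mu w U P"
    unfolding mu_def sum_distrib_left by (intro sum.cong) (auto simp: w0)
  finally show ?thesis by simp
qed

lemma wt_nonneg: "(\<And>i. i \<in> U \<Longrightarrow> 0 \<le> w i \<and> w i \<le> 1) \<Longrightarrow> X \<subseteq> U \<Longrightarrow> 0 \<le> wt w U X"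
  unfolding wt_def by (intro mult_nonneg_nonneg prod_nonneg) auto

lemma mu_nonneg: "(\<And>i. i \<in> U \<Longrightarrow> 0 \<le> w i \<and> w i \<le> 1) \<Longrightarrow> 0 \<le> mu w U P"
  unfolding mu_def by (intro sum_nonneg wt_nonneg) auto

lemma mu_mono:
  assumes "finite U" "\<And>i. i \<in> U \<Longrightarrow> 0 \<le> w i \<and> w i \<le> 1" "\<And>X. X \<subseteq> U \<Longrightarrow> P X \<Longrightarrow> Q X"
  shows "mu w U P \<le> mu w U Q"
  unfolding mu_def using assms
  by (intro sum_mono2) (auto intro: finite_subset[of _ "Pow U"] wt_nonneg)

lemma mu_true: "finite U \<Longrightarrow> mu w U (\<lambda>X. True) = 1"
  by (induction U rule: finite_induct) (auto simp: mu_empty mu_insert algebra_simps)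

lemma mu_not: assumes "finite U" shows "mu w U (\<lambda>X. \<not> P X) = 1 - mu w U P"
proof -
  have "mu w U (\<lambda>X. True) = mu w U (\<lambda>X. \<not> P X) + mu w U P"
    unfolding mu_def using assms
    by (subst sum.union_disjoint[symmetric]) (auto intro: finite_subset[of _ "Pow U"] intro!: sum.cong)
  then show ?thesis using mu_true[OF assms] by simp
qed

lemma mu_sub: "finite U \<Longrightarrow> S \<subseteq> U \<Longrightarrow> mu w U (\<lambda>X. S \<subseteq> X) = (\<Prod>i\<in>S. w i)"
proof (induction U arbitrary: S rule: finite_induct)
  case empty then show ?case by (simp add: mu_empty)
next
  case (insert a U)
  show ?case
  proof (cases "a \<in> S")
    case True
    have e1: "(\<lambda>X. S \<subseteq> insert a X) = (\<lambda>X. S - {a} \<subseteq> X)" by auto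
    have e2: "mu w U (\<lambda>X. S \<subseteq> X) = 0"
      unfolding mu_def using True insert by (intro sum.neutral) auto
    have e3: "(\<Prod>i\<in>S. w i) = w a * (\<Prod>i\<in>S - {a}. w i)"
      using True insert by (meson finite_insert finite_subset prod.remove)
    have e4: "S - {a} \<subseteq> U" using insert by auto
    have "mu w (insert a U) (\<lambda>X. S \<subseteq> X) = w a * mu w U (\<lambda>X. S - {a} \<subseteq> X)"
      by (simp add: mu_insert[OF insert.hyps] e1 e2)
    also have "\<dots> = (\<Prod>i\<in>S. w i)" using insert.IH[OF e4] e3 by simp
    finally show ?thesis .
  next
    case False
    then have "S \<subseteq> U" using insert by auto
    moreover have "(\<lambda>X. S \<subseteq> insert a X) = (\<lambda>X. S \<subseteq> X)" using False by auto
    ultimately show ?thesis using insert by (simp add: mu_insert algebra_simps)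
  qed
qed

definition downc :: "nat set \<Rightarrow> (nat set \<Rightarrow> bool) \<Rightarrow> bool" where
  "downc U P \<longleftrightarrow> (\<forall>X Y. X \<subseteq> U \<longrightarrow> Y \<subseteq> X \<longrightarrow> P X \<longrightarrow> P Y)"

lemma harris:
  assumes "finite U" "\<And>i. i \<in> U \<Longrightarrow> 0 \<le> w i \<and> w i \<le> 1" "downc U P" "downc U Q"
  shows "mu w U P * mu w U Q \<le> mu w U (\<lambda>X. P X \<and> Q X)"
  using assms
proof (induction U arbitrary: P Q rule: finite_induct)
  case empty then show ?case by (simp add: mu_empty)
next
  case (insert a U)
  let ?P1 = "\<lambda>X. P (insert a X)" and ?Q1 = "\<lambda>X. Q (insert a X)"
  have w: "\<And>i. i \<in> U \<Longrightarrow> 0 \<le> w i \<and> w i \<le> 1" using insert by auto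
  have d1: "downc U P" using insert.prems(2) unfolding downc_def by (meson subset_insertI2)
  have d2: "downc U Q" using insert.prems(3) unfolding downc_def by (meson subset_insertI2)
  have d3: "downc U ?P1" unfolding downc_def
  proof (intro allI impI)
    fix X Y assume "X \<subseteq> U" "Y \<subseteq> X" "P (insert a X)"
    moreover have "insert a X \<subseteq> insert a U" "insert a Y \<subseteq> insert a X" using \<open>X \<subseteq> U\<close> \<open>Y \<subseteq> X\<close> by auto
    ultimately show "P (insert a Y)" using insert.prems(2) unfolding downc_def by blast
  qed
  have d4: "downc U ?Q1" unfolding downc_def
  proof (intro allI impI)
    fix X Y assume "X \<subseteq> U" "Y \<subseteq> X" "Q (insert a X)"
    moreover have "insert a X \<subseteq> insert a U" "insert a Y \<subseteq> insert a X" using \<open>X \<subseteq> U\<close> \<open>Y \<subseteq> X\<close> by auto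
    ultimately show "Q (insert a Y)" using insert.prems(3) unfolding downc_def by blast
  qed
  note d = d1 d2 d3 d4
  have i1: "mu w U ?P1 * mu w U ?Q1 \<le> mu w U (\<lambda>X. ?P1 X \<and> ?Q1 X)"
    using insert.IH[OF w d(3,4)] .
  have i0: "mu w U P * mu w U Q \<le> mu w U (\<lambda>X. P X \<and> Q X)"
    using insert.IH[OF w d(1,2)] .
  have m1: "mu w U ?P1 \<le> mu w U P"
  proof (rule mu_mono[OF insert.hyps(1) w])
    fix X assume "X \<subseteq> U" "P (insert a X)"
    moreover have "insert a X \<subseteq> insert a U" "X \<subseteq> insert a X" using \<open>X \<subseteq> U\<close> by auto
    ultimately show "P X" using insert.prems(2) unfolding downc_def by blast
  qed auto
  have m2: "mu w U ?Q1 \<le> mu w U Q"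
  proof (rule mu_mono[OF insert.hyps(1) w])
    fix X assume "X \<subseteq> U" "Q (insert a X)"
    moreover have "insert a X \<subseteq> insert a U" "X \<subseteq> insert a X" using \<open>X \<subseteq> U\<close> by auto
    ultimately show "Q X" using insert.prems(3) unfolding downc_def by blast
  qed auto
  have wa: "0 \<le> w a" "w a \<le> 1" using insert.prems by auto
  have nn: "0 \<le> mu w U ?P1" "0 \<le> mu w U ?Q1" using mu_nonneg w by auto
  define x1 where "x1 = mu w U ?P1"
  define x0 where "x0 = mu w U P"
  define y1 where "y1 = mu w U ?Q1"
  define y0 where "y0 = mu w U Q"
  have key: "(w a * x1 + (1 - w a) * x0) * (w a * y1 + (1 - w a) * y0)
      \<le> w a * (x1 * y1) + (1 - w a) * (x0 * y0)"
  proof -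
    have "w a * (x1 * y1) + (1 - w a) * (x0 * y0) - (w a * x1 + (1 - w a) * x0) * (w a * y1 + (1 - w a) * y0)
        = w a * (1 - w a) * ((x0 - x1) * (y0 - y1))" by (simp add: algebra_simps)
    moreover have "0 \<le> w a * (1 - w a) * ((x0 - x1) * (y0 - y1))"
      using wa m1 m2 unfolding x0_def x1_def y0_def y1_def by (intro mult_nonneg_nonneg) auto
    ultimately show ?thesis by linarith
  qed
  have "mu w (insert a U) P * mu w (insert a U) Q = (w a * x1 + (1 - w a) * x0) * (w a * y1 + (1 - w a) * y0)"
    using insert.hyps by (simp add: mu_insert x0_def x1_def y0_def y1_def)
  also have "\<dots> \<le> w a * (x1 * y1) + (1 - w a) * (x0 * y0)" by (rule key)
  also have "\<dots> \<le> w a * mu w U (\<lambda>X. ?P1 X \<and> ?Q1 X) + (1 - w a) * mu w U (\<lambda>X. P X \<and> Q X)"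
    using i1 i0 wa unfolding x0_def x1_def y0_def y1_def
    by (intro add_mono mult_left_mono) auto
  also have "\<dots> = mu w (insert a U) (\<lambda>X. P X \<and> Q X)"
    using insert.hyps by (simp add: mu_insert)
  finally show ?case .
qed

lemma harris_family:
  assumes "finite U" "\<And>i. i \<in> U \<Longrightarrow> 0 \<le> w i \<and> w i \<le> 1" "finite F" "\<And>D. D \<in> F \<Longrightarrow> D \<subseteq> U"
  shows "(\<Prod>D\<in>F. 1 - (\<Prod>i\<in>D. w i)) \<le> mu w U (\<lambda>X. \<forall>D\<in>F. \<not> D \<subseteq> X)"
  using assms(3,4)
proof (induction F rule: finite_induct)
  case empty then show ?case using mu_true[OF assms(1)] by simp
next
  case (insert D F)
  have "(\<Prod>D\<in>insert D F. 1 - (\<Prod>i\<in>D. w i)) = (1 - (\<Prod>i\<in>D. w i)) * (\<Prod>D\<in>F. 1 - (\<Prod>i\<in>D. w i))"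
    using insert.hyps by simp
  also have "\<dots> \<le> mu w U (\<lambda>X. \<not> D \<subseteq> X) * mu w U (\<lambda>X. \<forall>D\<in>F. \<not> D \<subseteq> X)"
  proof (rule mult_mono)
    show "1 - (\<Prod>i\<in>D. w i) \<le> mu w U (\<lambda>X. \<not> D \<subseteq> X)"
      using mu_not[OF assms(1), of w "\<lambda>X. D \<subseteq> X"] mu_sub[OF assms(1), of D w] insert.prems by simp
    show "(\<Prod>D\<in>F. 1 - (\<Prod>i\<in>D. w i)) \<le> mu w U (\<lambda>X. \<forall>D\<in>F. \<not> D \<subseteq> X)"
      using insert by auto
    show "0 \<le> mu w U (\<lambda>X. \<not> D \<subseteq> X)" using mu_nonneg assms(2) by auto
    show "0 \<le> (\<Prod>D\<in>F. 1 - (\<Prod>i\<in>D. w i))"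
      using insert.prems assms(2) by (intro prod_nonneg) (smt (verit) prod_le_1 subsetD insertCI prod_nonneg)
  qed
  also have "\<dots> \<le> mu w U (\<lambda>X. \<not> D \<subseteq> X \<and> (\<forall>D\<in>F. \<not> D \<subseteq> X))"
  proof -
    have "downc U (\<lambda>X. \<not> D \<subseteq> X)" unfolding downc_def by blast
    moreover have "downc U (\<lambda>X. \<forall>D\<in>F. \<not> D \<subseteq> X)" unfolding downc_def by blast
    ultimately show ?thesis by (intro harris assms(1)) (use assms(2) in auto)
  qed
  also have "\<dots> = mu w U (\<lambda>X. \<forall>D\<in>insert D F. \<not> D \<subseteq> X)" by simp
  finally show ?case .
qed



lemma space_bern: "space (bern_space w) = UNIV"
  by (auto simp: bern_space_def space_PiM PiE_def extensional_def)

lemma bern_event: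
  assumes U: "finite U" and w: "\<forall>i\<in>U. 0 \<le> w i \<and> w i \<le> 1"
  shows "emeasure (bern_space w) {\<omega> \<in> space (bern_space w). P {i\<in>U. \<omega> i}} = ennreal (mu w U P)"
proof -
  define M where "M = (\<lambda>n. measure_pmf (bernoulli_pmf (w n)))"
  have bs: "bern_space w = PiM UNIV M" by (simp add: bern_space_def M_def)
  define box where "box X = prod_emb UNIV M U (PiE U (\<lambda>i. if i \<in> X then {True} else {False}))" for X
  define I where "I = {X. X \<subseteq> U \<and> P X}"
  have finI: "finite I" unfolding I_def using U by (auto intro: finite_subset[of _ "Pow U"])
  have mem: "\<omega> \<in> box X \<longleftrightarrow> (\<forall>i\<in>U. \<omega> i = (i \<in> X))" for \<omega> X
  proof -
    have "PiE UNIV (\<lambda>i. space (M i)) = UNIV" by (auto simp: M_def PiE_def extensional_def)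
    then show ?thesis unfolding box_def prod_emb_def by (auto simp: restrict_PiE_iff Pi_iff split: if_splits)
  qed
  have seteq: "{\<omega> \<in> space (bern_space w). P {i\<in>U. \<omega> i}} = (\<Union>X\<in>I. box X)"
  proof (rule set_eqI, rule iffI)
    fix \<omega> assume "\<omega> \<in> {\<omega> \<in> space (bern_space w). P {i\<in>U. \<omega> i}}"
    then have "{i\<in>U. \<omega> i} \<in> I" "\<omega> \<in> box {i\<in>U. \<omega> i}" unfolding I_def mem by auto
    then show "\<omega> \<in> (\<Union>X\<in>I. box X)" by blast
  next
    fix \<omega> assume "\<omega> \<in> (\<Union>X\<in>I. box X)"
    then obtain X where X: "X \<in> I" "\<omega> \<in> box X" by blast
    then have "{i\<in>U. \<omega> i} = X" unfolding mem I_def by auto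
    then show "\<omega> \<in> {\<omega> \<in> space (bern_space w). P {i\<in>U. \<omega> i}}" using X by (auto simp: I_def space_bern)
  qed
  have sets: "box X \<in> sets (PiM UNIV M)" for X
    unfolding box_def using U by (intro sets_PiM_I) (auto simp: M_def)
  have disj: "disjoint_family_on box I"
    unfolding disjoint_family_on_def I_def
  proof (intro ballI impI)
    fix X Y assume XY: "X \<in> {X. X \<subseteq> U \<and> P X}" "Y \<in> {X. X \<subseteq> U \<and> P X}" "X \<noteq> Y"
    show "box X \<inter> box Y = {}"
    proof (rule ccontr)
      assume "box X \<inter> box Y \<noteq> {}"
      then obtain \<omega> where "\<omega> \<in> box X" "\<omega> \<in> box Y" by blast
      then have "\<forall>i\<in>U. (i \<in> X) = (i \<in> Y)" unfolding mem by auto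
      then have "X = Y" using XY by auto
      then show False using XY by simp
    qed
  qed
  have ebox: "emeasure (PiM UNIV M) (box X) = ennreal (wt w U X)" if "X \<subseteq> U" for X
  proof -
    have "emeasure (PiM UNIV M) (box X) = (\<Prod>i\<in>U. emeasure (M i) (if i \<in> X then {True} else {False}))"
      unfolding box_def using U by (intro emeasure_PiM_emb) (auto simp: M_def prob_space_measure_pmf)
    also have "\<dots> = (\<Prod>i\<in>U. ennreal (if i \<in> X then w i else 1 - w i))"
      using w by (intro prod.cong) (auto simp: M_def emeasure_pmf_single)
    also have "\<dots> = ennreal (\<Prod>i\<in>U. (if i \<in> X then w i else 1 - w i))"
      using w by (intro prod_ennreal) auto
    also have "(\<Prod>i\<in>U. (if i \<in> X then w i else 1 - w i)) = wt w U X"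
    proof -
      have "U \<inter> {i. i \<in> X} = X" "U \<inter> - {i. i \<in> X} = U - X" using that by auto
      then show ?thesis unfolding wt_def by (simp add: prod.If_cases U)
    qed
    finally show ?thesis .
  qed
  have "emeasure (bern_space w) {\<omega> \<in> space (bern_space w). P {i\<in>U. \<omega> i}} = (\<Sum>X\<in>I. emeasure (PiM UNIV M) (box X))"
    unfolding seteq unfolding bs using sets disj finI by (intro sum_emeasure[symmetric]) auto
  also have "\<dots> = (\<Sum>X\<in>I. ennreal (wt w U X))" by (intro sum.cong) (auto simp: I_def ebox)
  also have "\<dots> = ennreal (\<Sum>X\<in>I. wt w U X)"
    using w by (intro sum_ennreal) (auto simp: I_def intro!: wt_nonneg)
  finally show ?thesis by (simp add: mu_def I_def)
qed

definition T :: "(nat\<Rightarrow>nat) \<Rightarrow> nat \<Rightarrow> nat \<Rightarrow> nat list set" where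
  "T b h n = {k. length k = h \<and> (\<Sum>i<h. b (Suc i) * k ! i) = n}"

definition Dn :: "(nat\<Rightarrow>nat) \<Rightarrow> nat \<Rightarrow> nat \<Rightarrow> nat set set" where
  "Dn b h n = (\<lambda>k. set k - {0}) ` T b h n"

lemma T_le:
  assumes b: "\<forall>i\<in>{1..h}. b i > 0" and k: "k \<in> T b h n" and x: "x \<in> set k"
  shows "x \<le> n"
proof -
  obtain j where j: "j < length k" "x = k ! j" using x by (auto simp: in_set_conv_nth)
  have jh: "j < h" using j k by (simp add: T_def)
  have "b (Suc j) > 0" using b jh by auto
  then have "x \<le> b (Suc j) * k ! j" using j by simp
  also have "\<dots> \<le> (\<Sum>i<h. b (Suc i) * k ! i)" using jh by (intro member_le_sum) auto
  finally show ?thesis using k by (simp add: T_def)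
qed

lemma T_fin: assumes b: "\<forall>i\<in>{1..h}. b i > 0" shows "finite (T b h n)"
proof -
  have "T b h n \<subseteq> {k. set k \<subseteq> {0..n} \<and> length k = h}"
    using T_le[OF b] by (auto simp: T_def)
  moreover have "finite {k. set k \<subseteq> {0..n::nat} \<and> length k = h}" by (rule finite_lists_length_eq) simp
  ultimately show ?thesis by (rule finite_subset)
qed

lemma Dn_fin: "\<forall>i\<in>{1..h}. b i > 0 \<Longrightarrow> finite (Dn b h n)"
  unfolding Dn_def using T_fin by blast

lemma Dn_sub: assumes b: "\<forall>i\<in>{1..h}. b i > 0" and D: "D \<in> Dn b h n" shows "D \<subseteq> {1..n}"
proof -
  obtain k where k: "k \<in> T b h n" "D = set k - {0}" using D unfolding Dn_def by blast
  show ?thesis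
  proof
    fix x assume "x \<in> D"
    then have "x \<in> set k" "x \<noteq> 0" using k by auto
    then show "x \<in> {1..n}" using T_le[OF b k(1)] by auto
  qed
qed

lemma event_eq:
  assumes b: "\<forall>i\<in>{1..h}. b i > 0"
  shows "{\<omega> \<in> space (bern_space w). rep b (rand_set \<omega>) h n = 0}
       = {\<omega> \<in> space (bern_space w). (\<lambda>X. \<forall>D\<in>Dn b h n. \<not> D \<subseteq> X) {i\<in>{1..n}. \<omega> i}}"
proof -
  have r: "rep b A h n = card {k \<in> T b h n. set k \<subseteq> A}" for A
    unfolding rep_def T_def by (rule arg_cong[where f=card]) auto
  have fin: "finite {k \<in> T b h n. set k \<subseteq> A}" for A using T_fin[OF b] by simp
  have sk: "set k \<subseteq> rand_set \<omega> \<longleftrightarrow> set k - {0} \<subseteq> {i\<in>{1..n}. \<omega> i}" if "k \<in> T b h n" for k \<omega>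
    using T_le[OF b that] by (auto simp: rand_set_def)
  show ?thesis
  proof (rule Collect_cong, rule conj_cong[OF refl])
    fix \<omega>
    have "rep b (rand_set \<omega>) h n = 0 \<longleftrightarrow> (\<forall>k\<in>T b h n. \<not> set k \<subseteq> rand_set \<omega>)"
      unfolding r using fin by auto
    also have "\<dots> \<longleftrightarrow> (\<forall>D\<in>Dn b h n. \<not> D \<subseteq> {i\<in>{1..n}. \<omega> i})"
      unfolding Dn_def using sk by auto
    finally show "(rep b (rand_set \<omega>) h n = 0) = (\<forall>D\<in>Dn b h n. \<not> D \<subseteq> {i \<in> {1..n}. \<omega> i})" .
  qed
qed

lemma event_lower:
  assumes b: "\<forall>i\<in>{1..h}. b i > 0" and w: "\<forall>i\<in>{1..n}. 0 \<le> w i \<and> w i \<le> 1"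
  shows "ennreal (\<Prod>D\<in>Dn b h n. 1 - (\<Prod>i\<in>D. w i))
     \<le> emeasure (bern_space w) {\<omega> \<in> space (bern_space w). rep b (rand_set \<omega>) h n = 0}"
proof -
  have "(\<Prod>D\<in>Dn b h n. 1 - (\<Prod>i\<in>D. w i)) \<le> mu w {1..n} (\<lambda>X. \<forall>D\<in>Dn b h n. \<not> D \<subseteq> X)"
    using w Dn_fin[OF b] Dn_sub[OF b] by (intro harris_family) auto
  moreover have "emeasure (bern_space w) {\<omega> \<in> space (bern_space w). (\<lambda>X. \<forall>D\<in>Dn b h n. \<not> D \<subseteq> X) {i\<in>{1..n}. \<omega> i}}
     = ennreal (mu w {1..n} (\<lambda>X. \<forall>D\<in>Dn b h n. \<not> D \<subseteq> X))"
    by (rule bern_event) (use w in auto)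
  ultimately show ?thesis unfolding event_eq[OF b] by (simp only: ennreal_leI)
qed



lemma sum_le_int:
  fixes \<phi> :: "real \<Rightarrow> real" and X I :: real and K :: nat
  assumes int: "(\<phi> has_integral I) {0..1}"
    and mono: "\<And>s t. 0 < s \<Longrightarrow> s \<le> t \<Longrightarrow> t \<le> 1 \<Longrightarrow> \<phi> t \<le> \<phi> s"
    and nn: "\<And>t. 0 \<le> t \<Longrightarrow> t \<le> 1 \<Longrightarrow> 0 \<le> \<phi> t"
    and X: "X > 0" and K: "real K \<le> X"
  shows "(\<Sum>k=1..K. \<phi> (real k / X)) \<le> X * I"
proof -
  have intg: "\<phi> integrable_on {0..1}" using int by blast
  have sub: "\<phi> integrable_on {c..d}" if "0 \<le> c" "d \<le> 1" for c d
  proof (cases "c \<le> d")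
    case True then show ?thesis using that by (intro integrable_subinterval_real[OF intg]) auto
  next
    case False then show ?thesis by (simp add: integrable_on_empty)
  qed
  have ind: "m \<le> K \<Longrightarrow> (\<Sum>k=1..m. \<phi> (real k / X)) / X \<le> integral {0..real m / X} \<phi>" for m
  proof (induction m)
    case 0 then show ?case by simp
  next
    case (Suc m)
    define lo where "lo = real m / X"
    define hi where "hi = real (Suc m) / X"
    have lohi: "0 \<le> lo" "lo \<le> hi" "hi \<le> 1" using X Suc.prems K
      by (auto simp: lo_def hi_def divide_right_mono field_simps)
    have comb: "integral {0..lo} \<phi> + integral {lo..hi} \<phi> = integral {0..hi} \<phi>"
      using Henstock_Kurzweil_Integration.integral_combine[where a=0 and c=lo and b=hi and f=\<phi>] lohi sub[of 0 hi] by simp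
    define \<psi> where "\<psi> x = (if x = lo then \<phi> hi else \<phi> x)" for x
    have psi_int: "\<psi> integrable_on {lo..hi}"
    proof (rule integrable_spike_finite[where S="{lo}" and f=\<phi>])
      show "\<phi> integrable_on {lo..hi}" using sub[of lo hi] lohi by simp
    qed (auto simp: \<psi>_def)
    have "integral {lo..hi} (\<lambda>x. \<phi> hi) \<le> integral {lo..hi} \<psi>"
    proof (rule integral_le)
      fix x assume x: "x \<in> {lo..hi}"
      show "\<phi> hi \<le> \<psi> x"
      proof (cases "x = lo")
        case False then have "0 < x" using x lohi by auto
        then show ?thesis using x lohi mono unfolding \<psi>_def by auto
      qed (simp add: \<psi>_def)
    qed (use psi_int in auto)
    also have "integral {lo..hi} \<psi> = integral {lo..hi} \<phi>"
      unfolding \<psi>_def by (rule integral_spike[of "{lo}"]) auto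
    finally have step: "\<phi> hi / X \<le> integral {lo..hi} \<phi>"
      using lohi X by (simp add: hi_def lo_def field_simps)
    have "(\<Sum>k=1..Suc m. \<phi> (real k / X)) / X = (\<Sum>k=1..m. \<phi> (real k / X)) / X + \<phi> hi / X"
      by (simp add: hi_def add_divide_distrib)
    also have "\<dots> \<le> integral {0..lo} \<phi> + integral {lo..hi} \<phi>"
      using Suc step by (intro add_mono) (auto simp: lo_def)
    finally show ?case using comb by (simp add: hi_def)
  qed
  have K1: "real K / X \<le> 1" using K X by (simp add: field_simps)
  have K0: "0 \<le> real K / X" using X by simp
  have "integral {0..real K / X} \<phi> + integral {real K / X..1} \<phi> = integral {0..1} \<phi>"
    using Henstock_Kurzweil_Integration.integral_combine[where a=0 and c="real K / X" and b=1 and f=\<phi>] K0 K1 intg by simp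
  moreover have "0 \<le> integral {real K / X..1} \<phi>"
    using K0 by (intro integral_nonneg sub nn) auto
  ultimately have "integral {0..real K / X} \<phi> \<le> I" using int by (simp add: integral_unique)
  with ind[of K] have "(\<Sum>k=1..K. \<phi> (real k / X)) / X \<le> I" by simp
  then show ?thesis using X by (simp add: field_simps)
qed



lemma sum_pow_base:
  fixes a X :: real
  assumes a: "0 < a" "a \<le> 1" and X: "0 \<le> X"
  shows "(\<Sum>k=1..nat \<lfloor>X\<rfloor>. real k powr (a-1)) \<le> X powr a / a"
proof (cases "X < 1")
  case True
  then have "nat \<lfloor>X\<rfloor> = 0" using X by linarith
  then show ?thesis using a by simp
next
  case False
  then have X0: "X > 0" by simp
  define \<phi> where "\<phi> t = t powr (a-1)" for t :: real
  have na: "a \<notin> \<int>\<^sub>\<le>\<^sub>0" using a nonpos_Ints_nonpos by fastforce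
  have G1: "Gamma (a+1) = a * Gamma a" using Gamma_plus1[OF na] .
  have "Gamma a > 0" using a by auto
  then have Gne: "Gamma a \<noteq> 0" by simp
  have B: "Beta a 1 = 1 / a"
    using a Gne unfolding Beta_def G1 by (simp add: field_simps)
  have int: "(\<phi> has_integral 1 / a) {0..1}"
  proof -
    have "((\<lambda>t. t powr (a - 1) * (1 - t) powr (1 - 1)) has_integral Beta a 1) {0..1}"
      using has_integral_Beta_real[of a 1] a by simp
    note h = this
    show ?thesis unfolding \<phi>_def
    proof (rule has_integral_spike_finite[where S="{1}"])
      show "((\<lambda>t. t powr (a - 1) * (1 - t) powr (1 - 1)) has_integral 1 / a) {0..1}" using h B by simp
    qed auto
  qed
  have le: "(\<Sum>k=1..nat \<lfloor>X\<rfloor>. \<phi> (real k / X)) \<le> X * (1/a)"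
  proof (rule sum_le_int[OF int])
    show "\<phi> t \<le> \<phi> s" if "0 < s" "s \<le> t" "t \<le> 1" for s t
      unfolding \<phi>_def using that a by (intro powr_mono2') auto
  qed (use X0 in \<open>auto simp: \<phi>_def\<close>)
  have eq: "\<phi> (real k / X) = real k powr (a-1) / X powr (a-1)" for k
    unfolding \<phi>_def by (simp add: powr_divide)
  have "(\<Sum>k=1..nat \<lfloor>X\<rfloor>. real k powr (a-1)) = X powr (a-1) * (\<Sum>k=1..nat \<lfloor>X\<rfloor>. \<phi> (real k / X))"
    unfolding eq sum_distrib_left using X0 by (intro sum.cong) auto
  also have "\<dots> \<le> X powr (a-1) * (X * (1/a))" using le by (intro mult_left_mono) auto
  also have "\<dots> = X powr a / a"
    using X0 by (simp add: powr_diff field_simps)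
  finally show ?thesis .
qed

lemma sum_pow_step:
  fixes a e X :: real
  assumes a: "0 < a" "a \<le> 1" and e: "0 < e" and X: "0 \<le> X"
  shows "(\<Sum>k=1..nat \<lfloor>X\<rfloor>. real k powr (a-1) * (X - real k) powr e) \<le> X powr (a+e) * Beta a (e+1)"
proof (cases "X < 1")
  case True
  then have "nat \<lfloor>X\<rfloor> = 0" using X by linarith
  moreover have "Beta a (e+1) \<ge> 0" using a e unfolding Beta_def
    by (intro divide_nonneg_pos mult_nonneg_nonneg) (auto intro!: less_imp_le Gamma_real_pos)
  ultimately show ?thesis by simp
next
  case False
  then have X0: "X > 0" by simp
  define \<phi> where "\<phi> t = t powr (a-1) * (1 - t) powr e" for t :: real
  have int: "(\<phi> has_integral Beta a (e+1)) {0..1}"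
    using has_integral_Beta_real[of a "e+1"] a e unfolding \<phi>_def by simp
  have le: "(\<Sum>k=1..nat \<lfloor>X\<rfloor>. \<phi> (real k / X)) \<le> X * Beta a (e+1)"
  proof (rule sum_le_int[OF int])
    show "\<phi> t \<le> \<phi> s" if "0 < s" "s \<le> t" "t \<le> 1" for s t
      unfolding \<phi>_def using that a e
      by (intro mult_mono powr_mono2' powr_mono2) auto
  qed (use X0 in \<open>auto simp: \<phi>_def\<close>)
  have eq: "real k powr (a-1) * (X - real k) powr e = X powr (a-1) * X powr e * \<phi> (real k / X)"
    if "k \<in> {1..nat \<lfloor>X\<rfloor>}" for k
  proof -
    have "1 - real k / X = (X - real k) / X" using X0 by (simp add: field_simps)
    then have "\<phi> (real k / X) = (real k powr (a-1) / X powr (a-1)) * ((X - real k) powr e / X powr e)"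
      unfolding \<phi>_def by (simp add: powr_divide)
    then show ?thesis using X0 by (simp add: field_simps)
  qed
  have "(\<Sum>k=1..nat \<lfloor>X\<rfloor>. real k powr (a-1) * (X - real k) powr e)
      = X powr (a-1) * X powr e * (\<Sum>k=1..nat \<lfloor>X\<rfloor>. \<phi> (real k / X))"
    unfolding sum_distrib_left by (intro sum.cong) (auto simp: eq)
  also have "\<dots> \<le> X powr (a-1) * X powr e * (X * Beta a (e+1))" using le by (intro mult_left_mono) auto
  also have "\<dots> = X powr (a+e) * Beta a (e+1)"
    using X0 by (simp add: powr_diff powr_add field_simps)
  finally show ?thesis .
qed

lemma prod_list_pos: "(\<And>x. x \<in> set xs \<Longrightarrow> x > 0) \<Longrightarrow> prod_list xs > (0::real)"
  by (induction xs) auto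

fun Fg :: "(nat \<Rightarrow> real) \<Rightarrow> nat list \<Rightarrow> real \<Rightarrow> real" where
  "Fg f [] x = (if 0 \<le> x then 1 else 0)"
| "Fg f (\<beta> # bs) x = (\<Sum>k=1..nat \<lfloor>x / real \<beta>\<rfloor>. f k * Fg f bs (x - real \<beta> * real k))"

lemma Fg_nonneg: "(\<And>k. 0 \<le> f k) \<Longrightarrow> 0 \<le> Fg f bs x"
  by (induction bs arbitrary: x) (auto intro!: sum_nonneg mult_nonneg_nonneg)

lemma Fg_mono: "(\<And>k. 0 \<le> f k) \<Longrightarrow> (\<And>k. f k \<le> g k) \<Longrightarrow> Fg f bs x \<le> Fg g bs x"
proof (induction bs arbitrary: x)
  case (Cons \<beta> bs)
  then show ?case
    by (auto intro!: sum_mono mult_mono Fg_nonneg order.trans[OF _ Cons.prems(2)])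
qed simp

lemma Fg_scale: "Fg (\<lambda>k. C * f k) bs x = C ^ length bs * Fg f bs x"
  by (induction bs arbitrary: x) (auto simp: sum_distrib_left algebra_simps)

lemma Fg_bound:
  fixes a x :: real
  assumes a: "0 < a" "a \<le> 1" and bs: "bs \<noteq> []" "\<forall>\<beta>\<in>set bs. \<beta> > 0" and x: "0 \<le> x"
  shows "Fg (\<lambda>k. real k powr (a-1)) bs x
     \<le> Gamma a ^ length bs * x powr (real (length bs) * a)
        / (prod_list (map (\<lambda>\<beta>. real \<beta> powr a) bs) * Gamma (real (length bs) * a + 1))"
  using bs x
proof (induction bs arbitrary: x)
  case Nil then show ?case by simp
next
  case (Cons \<beta> bs)
  have \<beta>: "real \<beta> > 0" using Cons.prems by auto
  define X where "X = x / real \<beta>"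
  have X: "0 \<le> X" using Cons.prems \<beta> by (simp add: X_def)
  have kle: "real \<beta> * real k \<le> x" if "k \<in> {1..nat \<lfloor>X\<rfloor>}" for k
  proof -
    have "real k \<le> real (nat \<lfloor>X\<rfloor>)" using that by simp
    also have "real (nat \<lfloor>X\<rfloor>) \<le> X" using X by (simp add: of_nat_nat)
    finally have "real k \<le> X" .
    then show ?thesis using \<beta> by (simp add: X_def field_simps)
  qed
  have Ga: "Gamma a > 0" using a by auto
  then have Gne: "Gamma a \<noteq> 0" by simp
  have na: "a \<notin> \<int>\<^sub>\<le>\<^sub>0" using a nonpos_Ints_nonpos by fastforce
  have Gap1: "Gamma (a + 1) = a * Gamma a" using Gamma_plus1[OF na] .
  have Gap1': "Gamma (1 + a) = a * Gamma a" using Gap1 by (simp add: add.commute)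
  show ?case
  proof (cases "bs = []")
    case True
    have "Fg (\<lambda>k. real k powr (a-1)) [\<beta>] x = (\<Sum>k=1..nat \<lfloor>X\<rfloor>. real k powr (a-1))"
      using kle unfolding X_def by (auto intro!: sum.cong)
    also have "\<dots> \<le> X powr a / a" by (rule sum_pow_base[OF a X])
    also have "\<dots> = Gamma a * x powr a / (real \<beta> powr a * Gamma (a + 1))"
      using Ga Gne a \<beta> by (simp add: X_def Gap1' powr_divide field_simps)
    finally show ?thesis using True by simp
  next
    case False
    define m where "m = length bs"
    have m: "m > 0" using False by (simp add: m_def)
    define C where "C = Gamma a ^ m / (prod_list (map (\<lambda>\<beta>. real \<beta> powr a) bs) * Gamma (real m * a + 1))"
    have IH: "Fg (\<lambda>k. real k powr (a-1)) bs y \<le> C * y powr (real m * a)" if "0 \<le> y" for y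
      using Cons.IH[OF False _ that] Cons.prems by (simp add: C_def m_def)
    have Cnn: "C \<ge> 0" unfolding C_def using a Cons.prems(2)
      by (intro divide_nonneg_pos mult_pos_pos prod_list_pos) (auto intro!: Gamma_real_pos add_nonneg_pos)
    have ma: "real m * a > 0" using m a by simp
    have "Fg (\<lambda>k. real k powr (a-1)) (\<beta> # bs) x
        = (\<Sum>k=1..nat \<lfloor>X\<rfloor>. real k powr (a-1) * Fg (\<lambda>k. real k powr (a-1)) bs (x - real \<beta> * real k))"
      by (simp add: X_def)
    also have "\<dots> \<le> (\<Sum>k=1..nat \<lfloor>X\<rfloor>. real k powr (a-1) * (C * (x - real \<beta> * real k) powr (real m * a)))"
      using kle by (intro sum_mono mult_left_mono IH) auto
    also have "\<dots> = C * real \<beta> powr (real m * a) * (\<Sum>k=1..nat \<lfloor>X\<rfloor>. real k powr (a-1) * (X - real k) powr (real m * a))"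
    proof -
      have "x - real \<beta> * real k = real \<beta> * (X - real k)" for k using \<beta> by (simp add: X_def field_simps)
      then show ?thesis unfolding sum_distrib_left by (intro sum.cong) (auto simp: powr_mult)
    qed
    also have "\<dots> \<le> C * real \<beta> powr (real m * a) * (X powr (a + real m * a) * Beta a (real m * a + 1))"
      using Cnn by (intro mult_left_mono sum_pow_step a ma X) auto
    also have "\<dots> = Gamma a ^ length (\<beta> # bs) * x powr (real (length (\<beta> # bs)) * a)
        / (prod_list (map (\<lambda>\<beta>. real \<beta> powr a) (\<beta> # bs)) * Gamma (real (length (\<beta> # bs)) * a + 1))"
    proof -
      have e1: "real (length (\<beta> # bs)) * a = a + real m * a" by (simp add: m_def algebra_simps)
      have e2: "X powr (a + real m * a) = x powr (a + real m * a) / (real \<beta> powr a * real \<beta> powr (real m * a))"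
        by (simp add: X_def powr_divide powr_add)
      have Gm: "Gamma (real m * a + 1) > 0" using ma by auto
      have Gm2: "Gamma (a + real m * a + 1) > 0" using ma a by auto
      have pp: "prod_list (map (\<lambda>\<beta>. real \<beta> powr a) bs) > 0"
        using Cons.prems(2) by (intro prod_list_pos) auto
      have bp: "real \<beta> powr a > 0" "real \<beta> powr (real m * a) > 0" using \<beta> by auto
      show ?thesis unfolding e1 e2 C_def Beta_def
        using Gm Gm2 pp bp Ga by (simp add: field_simps m_def)
    qed
    finally show ?thesis .
  qed
qed



lemma nat_floor_le_iff: "1 \<le> k \<Longrightarrow> (k \<le> nat \<lfloor>y\<rfloor>) = (real k \<le> y)"
proof
  assume "1 \<le> k" "k \<le> nat \<lfloor>y\<rfloor>"
  then have "\<lfloor>y\<rfloor> \<ge> 1" by linarith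
  then have "real (nat \<lfloor>y\<rfloor>) \<le> y" by (simp add: of_nat_nat)
  then show "real k \<le> y" using \<open>k \<le> nat \<lfloor>y\<rfloor>\<close> by (meson of_nat_le_iff order.trans)
qed (rule le_nat_floor)

fun wsum :: "nat list \<Rightarrow> nat list \<Rightarrow> nat" where
  "wsum (\<beta> # bs) (k # t) = \<beta> * k + wsum bs t"
| "wsum _ _ = 0"

definition LS :: "nat list \<Rightarrow> real \<Rightarrow> nat list set" where
  "LS bs x = {t. length t = length bs \<and> (\<forall>k\<in>set t. 1 \<le> k) \<and> real (wsum bs t) \<le> x}"

lemma LS_Nil: "LS [] x = (if 0 \<le> x then {[]} else {})"
  by (auto simp: LS_def)

lemma LS_Cons:
  assumes "\<beta> > 0"
  shows "LS (\<beta> # bs) x = (\<Union>k\<in>{1..nat \<lfloor>x / real \<beta>\<rfloor>}. (\<lambda>t. k # t) ` LS bs (x - real \<beta> * real k))"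
proof (rule set_eqI, rule iffI)
  fix t assume "t \<in> LS (\<beta> # bs) x"
  then obtain k t' where t: "t = k # t'" "length t' = length bs" "1 \<le> k" "\<forall>j\<in>set t'. 1 \<le> j"
      "real (\<beta> * k + wsum bs t') \<le> x"
    unfolding LS_def by (cases t) auto
  have "real \<beta> * real k \<le> x" using t(5) by simp
  then have "real k \<le> x / real \<beta>" using assms by (simp add: field_simps)
  then have "k \<in> {1..nat \<lfloor>x / real \<beta>\<rfloor>}" using t(3) nat_floor_le_iff by auto
  moreover have "t' \<in> LS bs (x - real \<beta> * real k)" using t unfolding LS_def by auto
  ultimately show "t \<in> (\<Union>k\<in>{1..nat \<lfloor>x / real \<beta>\<rfloor>}. (\<lambda>t. k # t) ` LS bs (x - real \<beta> * real k))"
    using t(1) by blast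
next
  fix t assume "t \<in> (\<Union>k\<in>{1..nat \<lfloor>x / real \<beta>\<rfloor>}. (\<lambda>t. k # t) ` LS bs (x - real \<beta> * real k))"
  then obtain k t' where "k \<in> {1..nat \<lfloor>x / real \<beta>\<rfloor>}" "t' \<in> LS bs (x - real \<beta> * real k)" "t = k # t'"
    by blast
  then show "t \<in> LS (\<beta> # bs) x" unfolding LS_def by auto
qed

lemma LS_sum:
  assumes "\<forall>\<beta>\<in>set bs. \<beta> > 0"
  shows "finite (LS bs x) \<and> (\<Sum>t\<in>LS bs x. prod_list (map f t)) = Fg f bs x"
  using assms
proof (induction bs arbitrary: x)
  case Nil then show ?case by (simp add: LS_Nil)
next
  case (Cons \<beta> bs)
  have \<beta>: "\<beta> > 0" using Cons.prems by simp
  let ?A = "\<lambda>k. (\<lambda>t. k # t) ` LS bs (x - real \<beta> * real k)"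
  have fin: "finite (?A k)" for k using Cons by simp
  have disj: "?A i \<inter> ?A j = {}" if "i \<noteq> j" for i j using that by auto
  have "finite (LS (\<beta> # bs) x)" unfolding LS_Cons[OF \<beta>] using fin by blast
  moreover have "(\<Sum>t\<in>LS (\<beta> # bs) x. prod_list (map f t)) = (\<Sum>k\<in>{1..nat \<lfloor>x / real \<beta>\<rfloor>}. \<Sum>t\<in>?A k. prod_list (map f t))"
    unfolding LS_Cons[OF \<beta>] using fin disj by (intro sum.UNION_disjoint) auto
  moreover have "(\<Sum>t\<in>?A k. prod_list (map f t)) = f k * Fg f bs (x - real \<beta> * real k)" for k
  proof -
    have "(\<Sum>t\<in>?A k. prod_list (map f t)) = (\<Sum>t\<in>LS bs (x - real \<beta> * real k). prod_list (map f (k # t)))"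
      by (subst sum.reindex) (auto simp: inj_on_def)
    also have "\<dots> = f k * Fg f bs (x - real \<beta> * real k)"
      using Cons.IH[of "x - real \<beta> * real k"] Cons.prems by (simp add: sum_distrib_left[symmetric])
    finally show ?thesis .
  qed
  ultimately show ?case by simp
qed

lemma wsum_eq: "length t = length bs \<Longrightarrow> wsum bs t = (\<Sum>i<length t. bs ! i * t ! i)"
proof (induction t arbitrary: bs)
  case Nil then show ?case by simp
next
  case (Cons k t)
  then obtain \<beta> bs' where bs: "bs = \<beta> # bs'" by (cases bs) auto
  show ?case using Cons bs by (simp add: sum.lessThan_Suc_shift del: sum.lessThan_Suc)
qed

lemma wsum_T: "length t = h \<Longrightarrow> (\<Sum>i<h. b (Suc i) * t ! i) = wsum (map b [1..<Suc h]) t"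
  by (subst wsum_eq) (auto intro!: sum.cong simp del: upt_Suc simp add: nth_map_upt)

lemma prod_list_distinct: "distinct xs \<Longrightarrow> prod_list (map f xs) = prod f (set xs)"
  by (induction xs) auto

lemma prod_list_mono_real:
  "(\<And>k. k \<in> set t \<Longrightarrow> 0 \<le> f k \<and> f k \<le> g k) \<Longrightarrow> prod_list (map f t) \<le> prod_list (map g (t::nat list)) \<and> (0::real) \<le> prod_list (map f t)"
proof (induction t)
  case (Cons k t)
  then show ?case by (auto intro!: mult_mono order.trans[of 0 "f k" "g k"])
qed simp

lemma generic_bound:
  fixes p g :: "nat \<Rightarrow> real" and N :: nat
  assumes b: "\<forall>i\<in>{1..h}. b i > 0"
    and pg: "\<And>k. 1 \<le> k \<Longrightarrow> k \<le> N \<Longrightarrow> 0 \<le> p k \<and> p k \<le> g k"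
    and gnn: "\<And>k. 0 \<le> g k"
  shows "(\<Sum>n=1..N. \<Sum>D\<in>{D\<in>Dn b h n. card D = h}. \<Prod>i\<in>D. p i) \<le> Fg g (map b [1..<Suc h]) (real N)"
proof -
  define bs where "bs = map b [1..<Suc h]"
  have bs0: "\<forall>\<beta>\<in>set bs. \<beta> > 0" using b by (auto simp: bs_def)
  define G where "G n = {t \<in> T b h n. distinct t \<and> 0 \<notin> set t}" for n
  have finG: "finite (G n)" for n using T_fin[OF b] by (simp add: G_def)
  have ent: "1 \<le> k \<and> k \<le> N" if "t \<in> G n" "n \<le> N" "k \<in> set t" for t n k
    using that T_le[OF b, of t n k] unfolding G_def by (cases k) auto
  have step1: "(\<Sum>D\<in>{D\<in>Dn b h n. card D = h}. \<Prod>i\<in>D. p i) \<le> (\<Sum>t\<in>G n. prod_list (map p t))"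
    if n: "n \<le> N" for n
  proof -
    have sub: "{D\<in>Dn b h n. card D = h} \<subseteq> set ` G n"
    proof
      fix D assume "D \<in> {D\<in>Dn b h n. card D = h}"
      then obtain t where t: "t \<in> T b h n" "D = set t - {0}" "card D = h" unfolding Dn_def by auto
      have lt: "length t = h" using t(1) by (simp add: T_def)
      have c1: "card (set t) \<le> h" using lt card_length by metis
      have c2: "card (set t - {0}) \<le> card (set t)" by (rule card_mono) auto
      have z: "0 \<notin> set t"
      proof
        assume "0 \<in> set t"
        then have "card (set t - {0}) = card (set t) - 1" by simp
        moreover have "card (set t) > 0" using \<open>0 \<in> set t\<close> by (auto simp: card_gt_0_iff)
        moreover have "card (set t - {0}) = h" using t by simp
        ultimately show False using c1 by linarith
      qed
      then have "card (set t) = h" using t by simp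
      then have "distinct t" using lt card_distinct by metis
      then show "D \<in> set ` G n" using t z by (auto simp: G_def)
    qed
    have nn: "0 \<le> (\<Prod>i\<in>D. p i)" if "D \<in> set ` G n" for D
      using that ent[OF _ n] pg by (force intro!: prod_nonneg)
    have "(\<Sum>D\<in>{D\<in>Dn b h n. card D = h}. \<Prod>i\<in>D. p i) \<le> (\<Sum>D\<in>set ` G n. \<Prod>i\<in>D. p i)"
      using sub finG nn by (intro sum_mono2) auto
    also have "\<dots> \<le> (\<Sum>t\<in>G n. (\<Prod>i\<in>set t. p i))"
      using sum_image_le[OF finG, where g="\<lambda>D. \<Prod>i\<in>D. p i" and f=set] nn by (simp add: o_def)
    also have "\<dots> = (\<Sum>t\<in>G n. prod_list (map p t))"
      by (intro sum.cong) (auto simp: G_def prod_list_distinct)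
    finally show ?thesis .
  qed
  have "(\<Sum>n=1..N. \<Sum>D\<in>{D\<in>Dn b h n. card D = h}. \<Prod>i\<in>D. p i) \<le> (\<Sum>n=1..N. \<Sum>t\<in>G n. prod_list (map p t))"
    using step1 by (intro sum_mono) auto
  also have "\<dots> = (\<Sum>t\<in>(\<Union>n\<in>{1..N}. G n). prod_list (map p t))"
  proof (rule sum.UNION_disjoint[symmetric])
    show "\<forall>i\<in>{1..N}. \<forall>j\<in>{1..N}. i \<noteq> j \<longrightarrow> G i \<inter> G j = {}"
      by (auto simp: G_def T_def)
  qed (use finG in auto)
  also have "\<dots> \<le> (\<Sum>t\<in>(\<Union>n\<in>{1..N}. G n). prod_list (map g t))"
  proof (rule sum_mono)
    fix t assume "t \<in> (\<Union>n\<in>{1..N}. G n)"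
    then obtain n where "n \<in> {1..N}" "t \<in> G n" by blast
    then show "prod_list (map p t) \<le> prod_list (map g t)"
      using prod_list_mono_real[of t p g] ent pg by auto
  qed
  also have "\<dots> \<le> (\<Sum>t\<in>LS bs (real N). prod_list (map g t))"
  proof (rule sum_mono2)
    show "finite (LS bs (real N))" using LS_sum[OF bs0] by blast
    show "(\<Union>n\<in>{1..N}. G n) \<subseteq> LS bs (real N)"
    proof
      fix t assume "t \<in> (\<Union>n\<in>{1..N}. G n)"
      then obtain n where n: "n \<in> {1..N}" "t \<in> G n" by blast
      then have "length t = h" "(\<Sum>i<h. b (Suc i) * t ! i) = n" "0 \<notin> set t" by (auto simp: G_def T_def)
      moreover have "\<forall>k\<in>set t. 1 \<le> k"
      proof
        fix k assume "k \<in> set t"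
        then show "1 \<le> k" using \<open>0 \<notin> set t\<close> by (metis less_one not_le)
      qed
      ultimately show "t \<in> LS bs (real N)" unfolding LS_def bs_def using n wsum_T[of t h b]
        by auto
    qed
    show "0 \<le> prod_list (map g t)" if "t \<in> LS bs (real N) - (\<Union>n\<in>{1..N}. G n)" for t
      using gnn by (intro prod_list_nonneg) auto
  qed
  also have "\<dots> = Fg g bs (real N)" using LS_sum[OF bs0] by blast
  finally show ?thesis by (simp add: bs_def)
qed



lemma Dn_count:
  assumes b: "\<forall>i\<in>{1..h}. b i > 0"
  shows "card {n\<in>{1..N}. D \<in> Dn b h n} \<le> (card D + 1) ^ h"
proof (cases "finite D")
  case False
  have "finite D" if "D \<in> Dn b h n" for n using that unfolding Dn_def by auto
  then have "{n\<in>{1..N}. D \<in> Dn b h n} = {}" using False by blast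
  then show ?thesis by (metis card.empty zero_le)
next
  case True
  define L where "L = {t. set t \<subseteq> insert 0 D \<and> length t = h}"
  have finL: "finite L" unfolding L_def using True by (intro finite_lists_length_eq) auto
  have "{n\<in>{1..N}. D \<in> Dn b h n} \<subseteq> (\<lambda>t. \<Sum>i<h. b (Suc i) * t ! i) ` L"
  proof
    fix n assume "n \<in> {n\<in>{1..N}. D \<in> Dn b h n}"
    then obtain t where "t \<in> T b h n" "D = set t - {0}" unfolding Dn_def by auto
    then show "n \<in> (\<lambda>t. \<Sum>i<h. b (Suc i) * t ! i) ` L" unfolding L_def T_def by auto
  qed
  then have "card {n\<in>{1..N}. D \<in> Dn b h n} \<le> card ((\<lambda>t. \<Sum>i<h. b (Suc i) * t ! i) ` L)"
    using finL by (intro card_mono) auto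
  also have "\<dots> \<le> card L" using finL by (rule card_image_le)
  also have "\<dots> = card (insert 0 D) ^ h" unfolding L_def using True by (intro card_lists_length_eq) auto
  also have "\<dots> \<le> (card D + 1) ^ h" using True by (intro power_mono) (auto simp: card_insert_if)
  finally show ?thesis .
qed

lemma degen_bound:
  fixes p :: "nat \<Rightarrow> real"
  assumes b: "\<forall>i\<in>{1..h}. b i > 0" and pnn: "\<And>k. 1 \<le> k \<Longrightarrow> k \<le> N \<Longrightarrow> 0 \<le> p k"
  shows "(\<Sum>n=1..N. \<Sum>D\<in>{D\<in>Dn b h n. card D < h}. \<Prod>i\<in>D. p i)
      \<le> real ((h+1)^h) * (\<Sum>D\<in>{D. D \<subseteq> {1..N} \<and> card D < h}. \<Prod>i\<in>D. p i)"
proof -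
  define SP where "SP = {D. D \<subseteq> {1..N} \<and> card D < h}"
  have finSP: "finite SP" unfolding SP_def by (rule finite_subset[of _ "Pow {1..N}"]) auto
  have pinn: "0 \<le> (\<Prod>i\<in>D. p i)" if "D \<in> SP" for D
    using that pnn unfolding SP_def by (intro prod_nonneg) auto
  have e1: "(\<Sum>D\<in>{D\<in>Dn b h n. card D < h}. \<Prod>i\<in>D. p i) = (\<Sum>D\<in>SP. if D \<in> Dn b h n then \<Prod>i\<in>D. p i else 0)"
    if "n \<in> {1..N}" for n
  proof -
    have "{D\<in>Dn b h n. card D < h} = SP \<inter> Dn b h n"
      using Dn_sub[OF b] that unfolding SP_def by fastforce
    then show ?thesis using finSP by (simp add: sum.inter_restrict)
  qed
  have "(\<Sum>n=1..N. \<Sum>D\<in>{D\<in>Dn b h n. card D < h}. \<Prod>i\<in>D. p i)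
      = (\<Sum>n=1..N. \<Sum>D\<in>SP. if D \<in> Dn b h n then \<Prod>i\<in>D. p i else 0)"
  proof (rule sum.cong[OF refl])
    fix n assume "n \<in> {1..N}"
    then show "(\<Sum>D\<in>{D\<in>Dn b h n. card D < h}. \<Prod>i\<in>D. p i) = (\<Sum>D\<in>SP. if D \<in> Dn b h n then \<Prod>i\<in>D. p i else 0)"
      by (rule e1)
  qed
  also have "\<dots> = (\<Sum>D\<in>SP. \<Sum>n=1..N. if D \<in> Dn b h n then \<Prod>i\<in>D. p i else 0)"
    by (rule sum.swap)
  also have "\<dots> = (\<Sum>D\<in>SP. real (card {n\<in>{1..N}. D \<in> Dn b h n}) * (\<Prod>i\<in>D. p i))"
  proof (intro sum.cong refl)
    fix D
    have "(\<Sum>n=1..N. if D \<in> Dn b h n then \<Prod>i\<in>D. p i else 0) = (\<Sum>n\<in>{n\<in>{1..N}. D \<in> Dn b h n}. \<Prod>i\<in>D. p i)"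
      by (rule sum.inter_filter[symmetric]) simp
    then show "(\<Sum>n=1..N. if D \<in> Dn b h n then \<Prod>i\<in>D. p i else 0) = real (card {n\<in>{1..N}. D \<in> Dn b h n}) * (\<Prod>i\<in>D. p i)"
      by simp
  qed
  also have "\<dots> \<le> (\<Sum>D\<in>SP. real ((h+1)^h) * (\<Prod>i\<in>D. p i))"
  proof (rule sum_mono)
    fix D assume D: "D \<in> SP"
    have "card {n\<in>{1..N}. D \<in> Dn b h n} \<le> (card D + 1) ^ h" by (rule Dn_count[OF b])
    also have "\<dots> \<le> (h+1)^h" using D unfolding SP_def by (intro power_mono) auto
    finally have "real (card {n\<in>{1..N}. D \<in> Dn b h n}) \<le> real ((h+1)^h)" by linarith
    then show "real (card {n\<in>{1..N}. D \<in> Dn b h n}) * (\<Prod>i\<in>D. p i) \<le> real ((h+1)^h) * (\<Prod>i\<in>D. p i)"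
      using pinn[OF D] by (rule mult_right_mono)
  qed
  finally show ?thesis by (simp add: sum_distrib_left SP_def)
qed

lemma small_sets_bound:
  fixes p :: "nat \<Rightarrow> real"
  assumes U: "finite U" and pnn: "\<And>i. i \<in> U \<Longrightarrow> 0 \<le> p i" and h: "h \<ge> 1"
  shows "(\<Sum>D\<in>{D. D \<subseteq> U \<and> card D < h}. \<Prod>i\<in>D. p i) \<le> exp 1 * (max 1 (\<Sum>i\<in>U. p i)) ^ (h - 1)"
proof -
  define P where "P = (\<Sum>i\<in>U. p i)"
  define M where "M = max 1 P"
  define x where "x = 1 / M"
  have M1: "M \<ge> 1" by (simp add: M_def)
  have x: "0 < x" "x \<le> 1" using M1 by (auto simp: x_def)
  have xP: "x * P \<le> 1" using M1 by (simp add: x_def M_def field_simps)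
  have key: "(\<Prod>i\<in>D. p i) \<le> M ^ (h-1) * (\<Prod>i\<in>D. x * p i)" if D: "D \<subseteq> U" "card D < h" for D
  proof -
    have pn: "0 \<le> (\<Prod>i\<in>D. p i)" using D pnn by (intro prod_nonneg) auto
    have "x ^ (h-1) \<le> x ^ card D" using x D by (intro power_decreasing) auto
    then have "M ^ (h-1) * x ^ (h-1) \<le> M ^ (h-1) * x ^ card D" using M1 by (intro mult_left_mono) auto
    moreover have "M ^ (h-1) * x ^ (h-1) = 1" using M1 by (simp add: x_def power_one_over)
    ultimately have "1 \<le> M ^ (h-1) * x ^ card D" by simp
    then have "(\<Prod>i\<in>D. p i) \<le> (M ^ (h-1) * x ^ card D) * (\<Prod>i\<in>D. p i)"
      using pn mult_right_mono[of 1 "M^(h-1)*x^card D" "\<Prod>i\<in>D. p i"] by simp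
    also have "\<dots> = M ^ (h-1) * (\<Prod>i\<in>D. x * p i)" by (simp add: prod.distrib)
    finally show ?thesis .
  qed
  have nn: "0 \<le> (\<Prod>i\<in>D. x * p i)" if "D \<in> Pow U" for D
    using that pnn x by (intro prod_nonneg) auto
  have "(\<Sum>D\<in>{D. D \<subseteq> U \<and> card D < h}. \<Prod>i\<in>D. p i) \<le> (\<Sum>D\<in>{D. D \<subseteq> U \<and> card D < h}. M ^ (h-1) * (\<Prod>i\<in>D. x * p i))"
    using key by (intro sum_mono) auto
  also have "\<dots> \<le> (\<Sum>D\<in>Pow U. M ^ (h-1) * (\<Prod>i\<in>D. x * p i))"
    using U nn M1 by (intro sum_mono2) auto
  also have "\<dots> = M ^ (h-1) * (\<Prod>i\<in>U. x * p i + 1)"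
    by (simp add: prod_add[OF U] sum_distrib_left)
  also have "(\<Prod>i\<in>U. x * p i + 1) \<le> (\<Prod>i\<in>U. exp (x * p i))"
    using pnn x by (intro prod_mono) (auto simp: add.commute)
  also have "\<dots> = exp (x * P)" by (simp add: exp_sum[OF U] P_def sum_distrib_left)
  also have "\<dots> \<le> exp 1" using xP by simp
  finally show ?thesis using M1 by (simp add: M_def P_def mult.commute mult_left_mono)
qed



lemma Dn_card: "D \<in> Dn b h n \<Longrightarrow> card D \<le> h"
proof -
  assume "D \<in> Dn b h n"
  then obtain t where t: "t \<in> T b h n" "D = set t - {0}" unfolding Dn_def by auto
  have "card D \<le> card (set t)" using t(2) by (intro card_mono) auto
  also have "\<dots> \<le> length t" by (rule card_length)
  finally show ?thesis using t(1) by (simp add: T_def)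
qed

lemma prod_list_upt: "prod_list (map f [1..<Suc h]) = prod f {1..h}"
proof -
  have "prod_list (map f [1..<Suc h]) = prod f (set [1..<Suc h])" by (rule prod_list_distinct) simp
  also have "set [1..<Suc h] = {1..h}" by auto
  finally show ?thesis .
qed

lemma powr_pow_real: "0 < x \<Longrightarrow> (x powr e) ^ n = x powr (e * real n)" for x e :: real
  by (induction n) (auto simp: powr_add algebra_simps)

lemma tot_bound:
  fixes h :: nat and b :: "nat \<Rightarrow> nat" and \<epsilon> c :: real and p :: "nat \<Rightarrow> real" and N :: nat
  assumes h: "h \<ge> 2"
    and b: "\<forall>i\<in>{1..h}. b i > 0"
    and eps: "0 < \<epsilon>" "\<epsilon> < 1/2"
    and c0: "c > 0"
    and ch: "c ^ h = (1 - \<epsilon>) * real (\<Prod>i=1..h. b i) powr (1 / real h) / Gamma (1 / real h) ^ h"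
    and p: "\<forall>n\<ge>1. p n = min (c * (real n * ln (real n)) powr (1 / real h) / real n) 1"
    and N: "N \<ge> 3"
  shows "(\<Sum>n=1..N. \<Sum>D\<in>Dn b h n. \<Prod>i\<in>D. p i)
    \<le> (1-\<epsilon>) * (real N * ln (real N))
       + real ((h+1)^h) * exp 1 * (1 + c * real h) ^ (h-1) * (real N * ln (real N)) powr (1 - 1 / real h)"
proof -
  define a where "a = 1 / real h"
  have a: "0 < a" "a \<le> 1" "a * real h = 1" using h by (auto simp: a_def)
  define L where "L = ln (real N)"
  have "ln 3 \<le> ln (real N)" using N by (subst ln_le_cancel_iff) auto
  then have L1: "L \<ge> 1" using ln3_gt_1 unfolding L_def by linarith
  define z where "z = real N * L"
  have "1 * 1 \<le> real N * L" using N L1 by (intro mult_mono) auto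
  then have z1: "z \<ge> 1" unfolding z_def by simp
  define g where "g k = c * L powr a * real k powr (a-1)" for k :: nat
  have pk: "0 \<le> p k \<and> p k \<le> g k" if "1 \<le> k" "k \<le> N" for k
  proof -
    have k: "real k \<ge> 1" using that by simp
    have lk: "0 \<le> ln (real k)" "ln (real k) \<le> L" using that k N unfolding L_def by auto
    have "p k \<le> c * (real k * ln (real k)) powr a / real k" using p that by (simp add: a_def)
    also have "\<dots> = c * ln (real k) powr a * (real k powr a / real k)" by (simp add: powr_mult)
    also have "real k powr a / real k = real k powr (a - 1)" using k by (simp add: powr_diff)
    also have "c * ln (real k) powr a * real k powr (a - 1) \<le> g k"
      unfolding g_def using c0 lk a by (intro mult_right_mono mult_left_mono powr_mono2) auto
    finally have "p k \<le> g k" .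
    moreover have "0 \<le> p k" using p that c0 by auto
    ultimately show ?thesis by simp
  qed
  define Pb where "Pb = real (\<Prod>i=1..h. b i)"
  have Pb: "Pb > 0" using b unfolding Pb_def of_nat_0_less_iff by (intro prod_pos) auto
  define bs where "bs = map b [1..<Suc h]"
  have bs: "bs \<noteq> []" "\<forall>\<beta>\<in>set bs. \<beta> > 0" "length bs = h" using b h by (auto simp: bs_def)
  have plb: "prod_list (map (\<lambda>\<beta>. real \<beta> powr a) bs) = Pb powr a"
  proof -
    have "map (\<lambda>\<beta>. real \<beta> powr a) bs = map (\<lambda>i. real (b i) powr a) [1..<Suc h]"
      by (simp add: bs_def del: upt_Suc)
    then have "prod_list (map (\<lambda>\<beta>. real \<beta> powr a) bs) = (\<Prod>i=1..h. real (b i) powr a)"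
      by (simp only: prod_list_upt)
    also have "\<dots> = Pb powr a" by (simp add: Pb_def prod_powr_distrib)
    finally show ?thesis .
  qed
  have Ga: "Gamma a > 0" using a by auto
  have main: "(\<Sum>n=1..N. \<Sum>D\<in>{D\<in>Dn b h n. card D = h}. \<Prod>i\<in>D. p i) \<le> (1 - \<epsilon>) * z"
  proof -
    have "(\<Sum>n=1..N. \<Sum>D\<in>{D\<in>Dn b h n. card D = h}. \<Prod>i\<in>D. p i) \<le> Fg g bs (real N)"
      unfolding bs_def by (rule generic_bound[OF b pk]) (auto simp: g_def c0 intro!: mult_nonneg_nonneg less_imp_le[OF c0])
    also have "Fg g bs (real N) = (c * L powr a) ^ h * Fg (\<lambda>k. real k powr (a-1)) bs (real N)"
      unfolding g_def using Fg_scale[of "c * L powr a" "\<lambda>k. real k powr (a-1)" bs] bs by simp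
    also have "\<dots> \<le> (c * L powr a) ^ h * (Gamma a ^ h * real N powr (real h * a) / (Pb powr a * Gamma (real h * a + 1)))"
      using Fg_bound[OF a(1,2) bs(1,2), of "real N"] bs(3) plb c0 by (intro mult_left_mono) auto
    also have "\<dots> = (1 - \<epsilon>) * z"
    proof -
      have e1: "(c * L powr a) ^ h = c ^ h * L" using L1 a by (simp add: power_mult_distrib powr_pow_real)
      have ha: "real h * a = 1" using a by (simp add: mult.commute)
      have G2: "Gamma (1 + 1 :: real) = 1" using Gamma_plus1[of "1::real"] by simp
      have ch': "c ^ h = (1 - \<epsilon>) * Pb powr a / Gamma a ^ h" using ch by (simp add: Pb_def a_def)
      have Gh: "Gamma a ^ h > 0" using Ga by simp
      have Pa: "Pb powr a > 0" using Pb by simp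
      have "(c * L powr a) ^ h * (Gamma a ^ h * real N powr (real h * a) / (Pb powr a * Gamma (real h * a + 1)))
          = c ^ h * Gamma a ^ h / Pb powr a * (real N * L)"
        unfolding e1 ha using G2 by simp
      also have "c ^ h * Gamma a ^ h / Pb powr a = 1 - \<epsilon>" unfolding ch' using Gh Pa Ga by (simp add: field_simps)
      finally show ?thesis by (simp add: z_def)
    qed
    finally show ?thesis .
  qed
  define P where "P = (\<Sum>i\<in>{1..N}. p i)"
  have P: "P \<le> c * real h * z powr a"
  proof -
    have "P \<le> (\<Sum>k=1..N. g k)" unfolding P_def using pk by (intro sum_mono) auto
    also have "\<dots> = c * L powr a * (\<Sum>k=1..nat \<lfloor>real N\<rfloor>. real k powr (a-1))"
      by (simp add: g_def sum_distrib_left)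
    also have "\<dots> \<le> c * L powr a * (real N powr a / a)"
      using sum_pow_base[OF a(1,2), of "real N"] c0 by (intro mult_left_mono) auto
    also have "\<dots> = c * real h * z powr a" by (simp add: z_def powr_mult a_def)
    finally show ?thesis .
  qed
  have za: "z powr a \<ge> 1" using z1 a by (simp add: ge_one_powr_ge_zero)
  have maxP: "max 1 P \<le> (1 + c * real h) * z powr a"
    using P za c0 by (auto simp: algebra_simps) (smt (verit, best) mult_le_cancel_left1 mult_nonneg_nonneg of_nat_0_le_iff)
  have degen: "(\<Sum>n=1..N. \<Sum>D\<in>{D\<in>Dn b h n. card D < h}. \<Prod>i\<in>D. p i)
      \<le> real ((h+1)^h) * exp 1 * (1 + c * real h) ^ (h-1) * z powr (1 - a)"
  proof -
    have "(\<Sum>n=1..N. \<Sum>D\<in>{D\<in>Dn b h n. card D < h}. \<Prod>i\<in>D. p i)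
        \<le> real ((h+1)^h) * (\<Sum>D\<in>{D. D \<subseteq> {1..N} \<and> card D < h}. \<Prod>i\<in>D. p i)"
      using pk by (intro degen_bound[OF b]) auto
    also have "\<dots> \<le> real ((h+1)^h) * (exp 1 * (max 1 P) ^ (h - 1))"
      unfolding P_def using pk h by (intro mult_left_mono small_sets_bound) auto
    also have "(max 1 P) ^ (h - 1) \<le> ((1 + c * real h) * z powr a) ^ (h - 1)"
      using maxP by (intro power_mono) auto
    also have "((1 + c * real h) * z powr a) ^ (h - 1) = (1 + c * real h) ^ (h-1) * z powr (1 - a)"
    proof -
      have "a * real (h - 1) = 1 - a" using a h by (simp add: of_nat_diff algebra_simps)
      then show ?thesis using z1 by (simp add: power_mult_distrib powr_pow_real)
    qed
    finally show ?thesis by (simp add: mult_left_mono algebra_simps)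
  qed
  have split: "(\<Sum>D\<in>Dn b h n. \<Prod>i\<in>D. p i) = (\<Sum>D\<in>{D\<in>Dn b h n. card D = h}. \<Prod>i\<in>D. p i) + (\<Sum>D\<in>{D\<in>Dn b h n. card D < h}. \<Prod>i\<in>D. p i)" for n
  proof -
    let ?A = "{D\<in>Dn b h n. card D = h}" and ?B = "{D\<in>Dn b h n. card D < h}"
    have eq: "Dn b h n = ?A \<union> ?B"
      using Dn_card[of _ b h n] by fastforce
    have fin: "finite (Dn b h n)" using Dn_fin[OF b] .
    have "(\<Sum>D\<in>?A \<union> ?B. \<Prod>i\<in>D. p i) = (\<Sum>D\<in>?A. \<Prod>i\<in>D. p i) + (\<Sum>D\<in>?B. \<Prod>i\<in>D. p i)"
      by (rule sum.union_disjoint) (use fin in auto)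
    moreover have "(\<Sum>D\<in>Dn b h n. \<Prod>i\<in>D. p i) = (\<Sum>D\<in>?A \<union> ?B. \<Prod>i\<in>D. p i)"
      using eq by (rule arg_cong)
    ultimately show ?thesis by simp
  qed
  have "(\<Sum>n=1..N. \<Sum>D\<in>Dn b h n. \<Prod>i\<in>D. p i) = (\<Sum>n=1..N. \<Sum>D\<in>{D\<in>Dn b h n. card D = h}. \<Prod>i\<in>D. p i) + (\<Sum>n=1..N. \<Sum>D\<in>{D\<in>Dn b h n. card D < h}. \<Prod>i\<in>D. p i)"
    by (simp add: split sum.distrib)
  also have "\<dots> \<le> (1 - \<epsilon>) * z + real ((h+1)^h) * exp 1 * (1 + c * real h) ^ (h-1) * z powr (1 - a)"
    using main degen by linarith
  finally show ?thesis by (simp add: z_def L_def a_def)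
qed



lemma prod_exp_lower:
  fixes x :: "'a \<Rightarrow> real"
  assumes F: "finite F" and d: "0 < \<delta>" "\<delta> \<le> 1" and x: "\<And>D. D \<in> F \<Longrightarrow> 0 \<le> x D \<and> x D \<le> \<delta>/2"
  shows "exp (-(1+\<delta>) * sum x F) \<le> (\<Prod>D\<in>F. 1 - x D)"
proof -
  have one: "exp (-(1+\<delta>) * y) \<le> 1 - y" if "0 \<le> y" "y \<le> \<delta>/2" for y
  proof -
    have "- y - 2 * y\<^sup>2 \<le> ln (1 - y)" using that d by (intro ln_one_minus_pos_lower_bound) auto
    moreover have "(2 * y) * y \<le> \<delta> * y" using that d by (intro mult_right_mono) auto
    then have "2 * y\<^sup>2 \<le> \<delta> * y" by (simp add: power2_eq_square mult.assoc)
    ultimately have "-(1+\<delta>) * y \<le> ln (1 - y)" by (simp add: algebra_simps)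
    then have "exp (-(1+\<delta>) * y) \<le> exp (ln (1 - y))" by simp
    also have "\<dots> = 1 - y" using that d by simp
    finally show ?thesis .
  qed
  have "exp (-(1+\<delta>) * sum x F) = (\<Prod>D\<in>F. exp (-(1+\<delta>) * x D))"
    by (simp add: sum_distrib_left exp_sum[OF F])
  also have "\<dots> \<le> (\<Prod>D\<in>F. 1 - x D)"
    using x one by (intro prod_mono) auto
  finally show ?thesis .
qed

lemma big_entry:
  assumes b: "\<forall>i\<in>{1..h}. b i > 0" and h: "h \<ge> 1" and t: "t \<in> T b h n" and n: "n \<ge> 1"
  shows "\<exists>k\<in>set t - {0}. n \<le> k * (Max (b ` {1..h}) * h)"
proof (rule ccontr)
  assume "\<not> ?thesis"
  then have neg: "\<forall>k\<in>set t - {0}. k * (Max (b ` {1..h}) * h) < n" by (auto simp: not_le)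
  have lt: "length t = h" and sm: "(\<Sum>i<h. b (Suc i) * t ! i) = n" using t by (auto simp: T_def)
  have each: "b (Suc j) * t ! j * h < n" if "j < h" for j
  proof (cases "t ! j = 0")
    case True then show ?thesis using n by simp
  next
    case False
    have "t ! j \<in> set t - {0}" using that lt False by auto
    then have "t ! j * (Max (b ` {1..h}) * h) < n" using neg by auto
    have "b (Suc j) \<le> Max (b ` {1..h})" using that by (intro Max_ge) auto
    then have "b (Suc j) * t ! j * h \<le> Max (b ` {1..h}) * t ! j * h" by (intro mult_le_mono1)
    also have "\<dots> = t ! j * (Max (b ` {1..h}) * h)" by (simp add: algebra_simps)
    finally show ?thesis using \<open>t ! j * (Max (b ` {1..h}) * h) < n\<close> by linarith
  qed
  have "(\<Sum>i<h. b (Suc i) * t ! i * h) < (\<Sum>i<h. n)"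
    using h each by (intro sum_strict_mono) (auto simp: lessThan_empty_iff)
  moreover have "(\<Sum>i<h. b (Suc i) * t ! i * h) = n * h" using sm by (simp add: sum_distrib_right[symmetric])
  ultimately show False by simp
qed

lemma p_small:
  fixes h :: nat and \<epsilon> c :: real and p :: "nat \<Rightarrow> real"
  assumes h: "h \<ge> 2" and c0: "c > 0"
    and p: "\<forall>n\<ge>1. p n = min (c * (real n * ln (real n)) powr (1 / real h) / real n) 1"
    and d: "\<delta> > 0"
  shows "\<exists>M. \<forall>k\<ge>M. p k \<le> \<delta>"
proof -
  have lim: "((\<lambda>x::real. c * sqrt (x * ln x) / x) \<longlongrightarrow> 0) at_top" by real_asymp
  have "\<forall>\<^sub>F x in at_top. c * sqrt (x * ln x) / x < \<delta>" using order_tendstoD(2)[OF lim d] .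
  then obtain X where X: "\<And>x. x \<ge> X \<Longrightarrow> c * sqrt (x * ln x) / x < \<delta>"
    by (auto simp: eventually_at_top_linorder)
  define M where "M = max 3 (nat \<lceil>X\<rceil>)"
  have "p k \<le> \<delta>" if k: "k \<ge> M" for k
  proof -
    have k3: "real k \<ge> 3" using k by (simp add: M_def)
    have kX: "real k \<ge> X" using k unfolding M_def by linarith
    have "ln 3 \<le> ln (real k)" using k3 by (subst ln_le_cancel_iff) auto
    then have ln1: "ln (real k) \<ge> 1" using ln3_gt_1 by linarith
    have "1 * 1 \<le> real k * ln (real k)" using k3 ln1 by (intro mult_mono) auto
    then have kl: "real k * ln (real k) \<ge> 1" by simp
    have "p k \<le> c * (real k * ln (real k)) powr (1 / real h) / real k" using p k3 by simp
    also have "(real k * ln (real k)) powr (1 / real h) \<le> (real k * ln (real k)) powr (1/2)"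
      using kl h by (intro powr_mono) (auto simp: field_simps)
    then have "c * (real k * ln (real k)) powr (1 / real h) / real k \<le> c * (real k * ln (real k)) powr (1/2) / real k"
      using c0 k3 by (intro divide_right_mono mult_left_mono) auto
    also have "(real k * ln (real k)) powr (1/2) = sqrt (real k * ln (real k))"
      using kl by (simp add: powr_half_sqrt)
    also have "c * sqrt (real k * ln (real k)) / real k < \<delta>" using X[OF kX] .
    finally show ?thesis by simp
  qed
  then show ?thesis by blast
qed



lemma p_unit:
  assumes c0: "c > 0" and p: "\<forall>n\<ge>1. p n = min (c * (real n * ln (real n)) powr (1 / real h) / real n) 1"
  shows "\<forall>i\<ge>1. 0 \<le> p i \<and> p i \<le> (1::real)"
  using p c0 by auto

lemma prob_lower:
  fixes h :: nat and b :: "nat \<Rightarrow> nat" and \<epsilon> c :: real and p :: "nat \<Rightarrow> real"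
  assumes h: "h \<ge> 2"
    and b: "\<forall>i\<in>{1..h}. b i > 0"
    and eps: "0 < \<epsilon>" "\<epsilon> < 1/2"
    and c0: "c > 0"
    and p: "\<forall>n\<ge>1. p n = min (c * (real n * ln (real n)) powr (1 / real h) / real n) 1"
  shows "\<exists>N0\<ge>1. \<forall>n\<ge>N0. ennreal (exp (-(1 + \<epsilon>/8) * (\<Sum>D\<in>Dn b h n. \<Prod>i\<in>D. p i)))
      \<le> emeasure (bern_space p) {\<omega> \<in> space (bern_space p). rep b (rand_set \<omega>) h n = 0}"
proof -
  define \<delta> where "\<delta> = \<epsilon>/8"
  have d: "0 < \<delta>" "\<delta> \<le> 1" using eps by (auto simp: \<delta>_def)
  obtain M where M: "\<And>k. k \<ge> M \<Longrightarrow> p k \<le> \<delta>/2" using p_small[OF h c0 p, of "\<delta>/2"] d by auto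
  have pu: "\<forall>i\<ge>1. 0 \<le> p i \<and> p i \<le> 1" by (rule p_unit[OF c0 p])
  define X where "X = Max (b ` {1..h}) * h"
  have X: "X \<ge> 1"
  proof -
    have "b h \<le> Max (b ` {1..h})" using h by (intro Max_ge) auto
    moreover have "b h > 0" using b h by auto
    then have "b h \<ge> 1" by simp
    ultimately have m1: "Max (b ` {1..h}) \<ge> 1" by linarith
    show ?thesis unfolding X_def using m1 h by simp
  qed
  define N0 where "N0 = M * X + 1"
  have "ennreal (exp (-(1 + \<epsilon>/8) * (\<Sum>D\<in>Dn b h n. \<Prod>i\<in>D. p i)))
      \<le> emeasure (bern_space p) {\<omega> \<in> space (bern_space p). rep b (rand_set \<omega>) h n = 0}" if n: "n \<ge> N0" for n
  proof -
    have n1: "n \<ge> 1" using n by (simp add: N0_def)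
    have small: "0 \<le> (\<Prod>i\<in>D. p i) \<and> (\<Prod>i\<in>D. p i) \<le> \<delta>/2" if D: "D \<in> Dn b h n" for D
    proof -
      obtain t where t: "t \<in> T b h n" "D = set t - {0}" using D unfolding Dn_def by auto
      have h1: "h \<ge> 1" using h by simp
      obtain k where k0: "k \<in> set t - {0}" "n \<le> k * X"
        using big_entry[OF b h1 t(1) n1] unfolding X_def by blast
      then have k: "k \<in> D" "n \<le> k * X" using t(2) by auto
      have "M * X < k * X" using k n unfolding N0_def by linarith
      then have kM: "k \<ge> M" by simp
      have Dsub: "D \<subseteq> {1..n}" using Dn_sub[OF b D] .
      have finD: "finite D" using Dsub finite_subset by blast
      have "(\<Prod>i\<in>D. p i) = p k * (\<Prod>i\<in>D - {k}. p i)" using k(1) finD by (simp add: prod.remove)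
      also have "\<dots> \<le> p k * 1"
        using pu Dsub k(1) by (intro mult_left_mono prod_le_1) auto
      also have "\<dots> \<le> \<delta>/2" using M[OF kM] by simp
      finally show ?thesis using pu Dsub by (auto intro!: prod_nonneg)
    qed
    have "exp (-(1 + \<delta>) * (\<Sum>D\<in>Dn b h n. \<Prod>i\<in>D. p i)) \<le> (\<Prod>D\<in>Dn b h n. 1 - (\<Prod>i\<in>D. p i))"
      using small by (intro prod_exp_lower Dn_fin[OF b] d) auto
    then have "ennreal (exp (-(1 + \<delta>) * (\<Sum>D\<in>Dn b h n. \<Prod>i\<in>D. p i))) \<le> ennreal (\<Prod>D\<in>Dn b h n. 1 - (\<Prod>i\<in>D. p i))"
      by (rule ennreal_leI)
    also have "\<dots> \<le> emeasure (bern_space p) {\<omega> \<in> space (bern_space p). rep b (rand_set \<omega>) h n = 0}"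
      using pu by (intro event_lower[OF b]) auto
    finally show ?thesis by (simp add: \<delta>_def)
  qed
  moreover have "N0 \<ge> 1" by (simp add: N0_def)
  ultimately show ?thesis by blast
qed



theorem mainTheorem14:
  fixes h :: nat and b :: "nat \<Rightarrow> nat" and \<epsilon> c :: real and p :: "nat \<Rightarrow> real"
  assumes "h \<ge> 2"
    and "\<forall>i\<in>{1..h}. b i > 0"
    and "Gcd (b ` {1..h}) = 1"
    and "0 < \<epsilon>" and "\<epsilon> < 1/2"
    and "c = (1 - \<epsilon>) powr (1 / real h) * (real (\<Prod>i=1..h. b i)) powr (1 / real (h^2))
             / Gamma (1 / real h)"
    and "\<forall>n\<ge>1. p n = min (c * (real n * ln (real n)) powr (1 / real h) / real n) 1"
  shows "(\<Sum>n. emeasure (bern_space p)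
            {\<omega> \<in> space (bern_space p). rep b (rand_set \<omega>) h (Suc n) = 0}) = \<infinity>"
proof -
  note h = assms(1) and b = assms(2) and eps = assms(4,5) and cdef = assms(6) and p = assms(7)
  define a where "a = 1 / real h"
  have a: "0 < a" "a \<le> 1" "a * real h = 1" using h by (auto simp: a_def)
  define Pb where "Pb = real (\<Prod>i=1..h. b i)"
  have Pb: "Pb > 0" using b unfolding Pb_def of_nat_0_less_iff by (intro prod_pos) auto
  have Ga: "Gamma a > 0" using a by auto
  have c0: "c > 0" unfolding cdef a_def[symmetric] Pb_def[symmetric]
    using eps Pb Ga by (intro divide_pos_pos mult_pos_pos) auto
  have ch: "c ^ h = (1 - \<epsilon>) * real (\<Prod>i=1..h. b i) powr (1 / real h) / Gamma (1 / real h) ^ h"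
  proof -
    have e1: "((1 - \<epsilon>) powr a) ^ h = 1 - \<epsilon>" using eps a by (simp add: powr_pow_real)
    have e2: "(Pb powr (1 / (real h)^2)) ^ h = Pb powr a"
      using Pb h by (simp add: powr_pow_real a_def power2_eq_square)
    show ?thesis unfolding cdef a_def[symmetric] Pb_def[symmetric]
      by (simp add: power_mult_distrib power_divide e1 e2)
  qed
  obtain N0 where N0: "N0 \<ge> 1" and low: "\<And>n. n \<ge> N0 \<Longrightarrow> ennreal (exp (-(1 + \<epsilon>/8) * (\<Sum>D\<in>Dn b h n. \<Prod>i\<in>D. p i)))
      \<le> emeasure (bern_space p) {\<omega> \<in> space (bern_space p). rep b (rand_set \<omega>) h n = 0}"
    using prob_lower[OF h b eps c0 p] by blast
  define E where "E n = emeasure (bern_space p) {\<omega> \<in> space (bern_space p). rep b (rand_set \<omega>) h n = 0}" for n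
  define S where "S n = (\<Sum>D\<in>Dn b h n. \<Prod>i\<in>D. p i)" for n
  define \<delta> where "\<delta> = \<epsilon>/8"
  have d: "0 < \<delta>" "\<delta> < 1" using eps by (auto simp: \<delta>_def)
  define C1 where "C1 = real ((h+1)^h) * exp 1 * (1 + c * real h) ^ (h-1)"
  have C1: "C1 > 0" unfolding C1_def using c0 by (intro mult_pos_pos) (auto intro!: zero_less_power add_pos_nonneg)
  have pu: "\<forall>i\<ge>1. 0 \<le> p i \<and> p i \<le> 1" by (rule p_unit[OF c0 p])
  have Snn: "S n \<ge> 0" for n
    unfolding S_def using pu Dn_sub[OF b] by (intro sum_nonneg prod_nonneg) fastforce
  have key: "\<exists>N. ennreal B \<le> (\<Sum>n<N. E (Suc n))" for B :: real
  proof -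
    define R where "R = max (max ((1+\<delta>)/\<delta> * real N0) ((C1/\<delta>)^h)) ((2*\<bar>B\<bar>+2) powr (4/\<epsilon>))"
    define N where "N = nat \<lceil>R\<rceil> + N0 + 3"
    have NR: "real N \<ge> R" unfolding N_def by linarith
    have N3: "N \<ge> 3" "N \<ge> N0" by (auto simp: N_def)
    define L where "L = ln (real N)"
    have "ln 3 \<le> ln (real N)" using N3 by (subst ln_le_cancel_iff) auto
    then have L1: "L \<ge> 1" using ln3_gt_1 unfolding L_def by linarith
    define z where "z = real N * L"
    have zN: "z \<ge> real N" unfolding z_def using L1 N3 by (simp add: mult_le_cancel_left1)
    have z0: "z > 0" using zN N3 by linarith
    have tot: "(\<Sum>n=1..N. S n) \<le> (1-\<epsilon>) * z + C1 * z powr (1 - a)"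
      using tot_bound[OF h b eps c0 ch p N3(1)] unfolding S_def C1_def z_def L_def a_def by simp
    have zC: "z \<ge> (C1/\<delta>)^h" using zN NR unfolding R_def by linarith
    have za: "z powr a \<ge> C1/\<delta>"
    proof -
      have "((C1/\<delta>)^h) powr a \<le> z powr a" using zC a C1 d by (intro powr_mono2) auto
      moreover have "((C1/\<delta>)^h) powr a = C1/\<delta>"
        using C1 d a by (simp add: powr_realpow[symmetric] powr_powr mult.commute[of "real h" a])
      ultimately show ?thesis by simp
    qed
    have err: "C1 * z powr (1 - a) \<le> \<delta> * z"
    proof -
      have zpa: "z powr a > 0" using z0 by simp
      have "C1 * z powr (1 - a) = C1 * z / z powr a" using z0 by (simp add: powr_diff)
      also have "\<dots> \<le> \<delta> * z"
        using za zpa d z0 C1 by (simp add: divide_le_eq field_simps)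
      finally show ?thesis .
    qed
    define I where "I = {N0..N}"
    define M where "M = card I"
    have M: "real M = real N - real N0 + 1" using N3 by (simp add: M_def I_def of_nat_diff)
    have MN: "real N \<le> (1+\<delta>) * real M"
    proof -
      have "(1+\<delta>)/\<delta> * real N0 \<le> real N" using NR unfolding R_def by linarith
      then have "(1+\<delta>) * real N0 \<le> \<delta> * real N" using d by (simp add: field_simps)
      then show ?thesis unfolding M using d by (simp add: algebra_simps)
    qed
    have M0: "real M > 0" using M N3 by simp
    have IS: "(\<Sum>n\<in>I. S n) \<le> (\<Sum>n=1..N. S n)"
      unfolding I_def using Snn N0 by (intro sum_mono2) auto
    have jen: "exp (\<Sum>n\<in>I. (1 / real M) *\<^sub>R (-(1+\<delta>) * S n)) \<le> (\<Sum>n\<in>I. (1 / real M) * exp (-(1+\<delta>) * S n))"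
      using M0 by (intro convex_on_sum[OF _ _ exp_convex]) (auto simp: I_def M_def)
    have jen2: "real M * exp (-(1+\<delta>) * (\<Sum>n\<in>I. S n) / real M) \<le> (\<Sum>n\<in>I. exp (-(1+\<delta>) * S n))"
    proof -
      have e1: "(\<Sum>n\<in>I. (1 / real M) *\<^sub>R (-(1+\<delta>) * S n)) = -(1+\<delta>) * (\<Sum>n\<in>I. S n) / real M"
        by (simp add: sum_distrib_left[symmetric] sum_divide_distrib[symmetric] sum_subtractf sum_negf field_simps)
      have e2: "(\<Sum>n\<in>I. (1 / real M) * exp (-(1+\<delta>) * S n)) = (\<Sum>n\<in>I. exp (-(1+\<delta>) * S n)) / real M"
        by (simp add: sum_divide_distrib)
      have "exp (-(1+\<delta>) * (\<Sum>n\<in>I. S n) / real M) \<le> (\<Sum>n\<in>I. exp (-(1+\<delta>) * S n)) / real M"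
        using jen unfolding e1 e2 .
      then show ?thesis using M0 by (simp add: le_divide_eq mult.commute)
    qed
    have arith: "(1+\<delta>) * (1+\<delta>) * (1 - \<epsilon> + \<delta>) \<le> 1 - \<epsilon>/4"
      using eps unfolding \<delta>_def by (simp add: field_simps)
    have expo: "(1+\<delta>) * (\<Sum>n\<in>I. S n) / real M \<le> (1 - \<epsilon>/4) * L"
    proof -
      have "(\<Sum>n\<in>I. S n) \<le> (1 - \<epsilon> + \<delta>) * z" using IS tot err by (simp add: algebra_simps)
      then have "(1+\<delta>) * (\<Sum>n\<in>I. S n) / real M \<le> (1+\<delta>) * ((1 - \<epsilon> + \<delta>) * z) / real M"
        using d M0 by (intro divide_right_mono mult_left_mono) auto
      also have "\<dots> \<le> (1+\<delta>) * ((1 - \<epsilon> + \<delta>) * z) / (real N / (1+\<delta>))"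
      proof (rule divide_left_mono)
        show "0 \<le> (1+\<delta>) * ((1 - \<epsilon> + \<delta>) * z)" using d eps z0 by (intro mult_nonneg_nonneg) auto
        show "real N / (1+\<delta>) \<le> real M" using MN d by (simp add: field_simps)
        show "0 < real M * (real N / (1+\<delta>))" using M0 N3 d by simp
      qed
      also have "\<dots> = (1+\<delta>) * (1+\<delta>) * (1 - \<epsilon> + \<delta>) * L"
        using N3 d by (simp add: z_def field_simps)
      also have "\<dots> \<le> (1 - \<epsilon>/4) * L" using arith L1 by (intro mult_right_mono) auto
      finally show ?thesis .
    qed
    have big: "B \<le> (\<Sum>n\<in>I. exp (-(1+\<delta>) * S n))"
    proof -
      have "real M * exp (-(1 - \<epsilon>/4) * L) \<le> real M * exp (-(1+\<delta>) * (\<Sum>n\<in>I. S n) / real M)"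
      proof -
        have x1: "-(1+\<delta>) * (\<Sum>n\<in>I. S n) / real M = - ((1+\<delta>) * (\<Sum>n\<in>I. S n) / real M)" by (simp add: algebra_simps minus_divide_left)
        have "-(1 - \<epsilon>/4) * L \<le> -(1+\<delta>) * (\<Sum>n\<in>I. S n) / real M" unfolding x1 using expo by (simp only: mult_minus_left)
        then show ?thesis using M0 by (intro mult_left_mono) auto
      qed
      also have "\<dots> \<le> (\<Sum>n\<in>I. exp (-(1+\<delta>) * S n))" by (rule jen2)
      finally have s1: "real M * exp (-(1 - \<epsilon>/4) * L) \<le> (\<Sum>n\<in>I. exp (-(1+\<delta>) * S n))" .
      have eq1: "exp (-(1 - \<epsilon>/4) * L) = real N powr (-(1 - \<epsilon>/4))" using N3 by (simp add: powr_def L_def)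
      have mono: "real N / (1+\<delta>) * real N powr (-(1 - \<epsilon>/4)) \<le> real M * real N powr (-(1 - \<epsilon>/4))"
        using MN d by (intro mult_right_mono) (auto simp: field_simps)
      have eq2: "real N / (1+\<delta>) * real N powr (-(1 - \<epsilon>/4)) = real N powr (\<epsilon>/4) / (1+\<delta>)"
      proof -
        have "real N * real N powr (-(1 - \<epsilon>/4)) = real N powr (\<epsilon>/4)"
          using N3 by (simp add: powr_add[symmetric] powr_minus) (simp add: powr_diff powr_minus_divide)
        then show ?thesis by simp
      qed
      have ge: "real N powr (\<epsilon>/4) \<ge> 2*\<bar>B\<bar>+2"
      proof -
        have "((2*\<bar>B\<bar>+2) powr (4/\<epsilon>)) powr (\<epsilon>/4) \<le> real N powr (\<epsilon>/4)"
          using NR eps unfolding R_def by (intro powr_mono2) auto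
        moreover have "((2*\<bar>B\<bar>+2) powr (4/\<epsilon>)) powr (\<epsilon>/4) = 2*\<bar>B\<bar>+2"
          using eps by (simp add: powr_powr)
        ultimately show ?thesis by simp
      qed
      have bd: "B \<le> (2*\<bar>B\<bar>+2) / (1+\<delta>)"
      proof -
        have "B * (1+\<delta>) \<le> \<bar>B\<bar> * (1+\<delta>)" using d by (intro mult_right_mono) auto
        also have "\<dots> \<le> \<bar>B\<bar> * 2" using d by (intro mult_left_mono) auto
        finally have "B * (1+\<delta>) \<le> 2*\<bar>B\<bar>+2" by simp
        then show ?thesis using d by (simp add: le_divide_eq)
      qed
      have "B \<le> (2*\<bar>B\<bar>+2) / (1+\<delta>)" by (rule bd)
      also have "\<dots> \<le> real N powr (\<epsilon>/4) / (1+\<delta>)" using ge d by (intro divide_right_mono) auto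
      also have "\<dots> \<le> real M * real N powr (-(1 - \<epsilon>/4))" using mono unfolding eq2 .
      also have "\<dots> = real M * exp (-(1 - \<epsilon>/4) * L)" using eq1 by simp
      also have "\<dots> \<le> (\<Sum>n\<in>I. exp (-(1+\<delta>) * S n))" by (rule s1)
      finally show ?thesis .
    qed
    have "ennreal B \<le> ennreal (\<Sum>n\<in>I. exp (-(1+\<delta>) * S n))" using big by (rule ennreal_leI)
    also have "\<dots> = (\<Sum>n\<in>I. ennreal (exp (-(1+\<delta>) * S n)))" by (rule sum_ennreal[symmetric]) auto
    also have "\<dots> \<le> (\<Sum>n\<in>I. E n)"
      using low unfolding I_def E_def S_def \<delta>_def by (intro sum_mono) auto
    also have "\<dots> \<le> (\<Sum>n=1..N. E n)" unfolding I_def using N0 by (intro sum_mono2) auto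
    also have "\<dots> = (\<Sum>n<N. E (Suc n))" by (subst image_Suc_lessThan[symmetric]) (simp add: sum.reindex)
    finally show ?thesis by blast
  qed
  have "(\<Sum>n. E (Suc n)) = \<infinity>"
  proof (rule ccontr)
    assume ne: "(\<Sum>n. E (Suc n)) \<noteq> \<infinity>"
    then obtain r where r: "(\<Sum>n. E (Suc n)) = ennreal r" "r \<ge> 0"
      using ennreal_cases[of "\<Sum>n. E (Suc n)"] by auto
    obtain N where "ennreal (r + 1) \<le> (\<Sum>n<N. E (Suc n))" using key by blast
    also have "(\<Sum>n<N. E (Suc n)) \<le> (\<Sum>n. E (Suc n))"
      unfolding suminf_eq_SUP by (rule SUP_upper) simp
    finally have "ennreal (r+1) \<le> ennreal r" using r by simp
    then show False using r by (simp add: ennreal_le_iff)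
  qed
  then show ?thesis by (simp add: E_def)
qed


end
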